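(* Let $\nu_\epsilon$ be an $\epsilon$-BP from $a^*$ to $b^*$ in a domain $D^*$ of the $\epsilon$-brick-wall lattice, with vertices $X^\epsilon_0,X^\epsilon_1,\ldots$. Conditioned on the event that $X^\epsilon_j$ is an unblocked vertex of $\nu_\epsilon$, writing $V=X^\epsilon_j$, $\mathbb{P}[X^\epsilon_{j+1}=P_V\mid X^\epsilon_j\text{ unblocked}]=\tfrac12$ and $\mathbb{P}[X^\epsilon_{j+1}=V',X^\epsilon_{j+2}=Q_V\mid X^\epsilon_j\text{ unblocked}]=\mathbb{P}[X^\epsilon_{j+1}=V',X^\epsilon_{j+2}=R_V\mid X^\epsilon_j\text{ unblocked}]=\tfrac14.$
   Context: Brick-wall lattice of mesh $\delta$: replace each hexagon of the hexagonal lattice of mesh $\delta$ by a rectangle of width $\sqrt3\delta$ so that the rectangles tessellate the plane, each rectangle having six vertices (four corners and one interior point on each of its top and bottom sides); label rows by $\mathbb{Z}$ with row $0$ containing the real line. For small $\epsilon>0$ the $\epsilon$-brick-wall lattice is obtained by shifting even rows left by $(\sqrt3/2-\epsilon)\delta/2$ and odd rows right by the same amount (for $\epsilon<0$ it is the reflection across the $y$-axis of the $(-\epsilon)$-brick-wall lattice); it is topologically equivalent to the hexagonal lattice and contains edges of Euclidean length $\epsilon\delta$. Let $\Phi_\epsilon$ be the map sending hexagonal lattice vertices bijectively to $\epsilon$-brick-wall vertices (realizing this equivalence; images of paths lie within $3\delta$ of the original path). If $\nu$ is the critical site percolation exploration path on the hexagonal lattice of mesh $\delta$ in a domain $D$ from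 $a$ to $b$, then $\nu_\epsilon=\Phi_\epsilon(\nu)$ is the $\epsilon$-BP in $D^*=\Phi_\epsilon(D)$ from $a^*=\Phi_\epsilon(a)$ to $b^*=\Phi_\epsilon(b)$. For a simple lattice path from $a^*$ to an interior vertex $V$ whose last edge does not have length $\epsilon\delta$: $V'$ is the neighbour of $V$ joined by an edge of length $\epsilon\delta$, $V''$ is the second-last vertex of the path, $P_V$ is the remaining neighbour of $V$, and $Q_V,R_V$ are the neighbours of $V'$ other than $V$, with the edge $V'R_V$ parallel to $V''V$ and the edge $V'Q_V$ perpendicular to $V''V$. The path leaves an unblocked path to $b^*$ if it can be continued to a simple path from $a^*$ to $b^*$ in $D^*$ in each of the three ways: next vertex $P_V$; next vertices $V',Q_V$; next vertices $V',R_V$. A vertex $X^\epsilon_j$ of $\nu_\epsilon$ is unblocked if the subpath of $\nu_\epsilon$ from $a^*$ to $X^\epsilon_j$ leaves an unblocked path to $b^*$. *)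

theory Defs
  imports Complex_Main "HOL-Library.FuncSet"
begin

text \<open>
Vertices are pairs (x, r) of integers: r indexes the horizontal line (the common
boundary line of brick rows r-1 and r), x indexes the vertices along that line
from left to right.
Brick (face) (x, r), for x + r even, is the rectangle with bottom side on line r
from (x, r) to (x+2, r) and top side on line r+1 from (x, r+1) to (x+2, r+1); it has
six vertices (four corners, one interior point on each horizontal side).
Putting vertex (x, r) at the planar point (x, r) gives a planar embedding of the
brick-wall lattice, used below only to decide left/right of directed edges and
horizontal/vertical directions.  In the epsilon-brick-wall lattice (epsilon > 0) the
horizontal edges of each line alternately have length epsilon*delta and
(sqrt 3 - epsilon)*delta; here the short edges are those joining (2k, r) and
(2k+1, r).  (The short edge at a corner lies on alternating sides on alternating
lines, in accordance with the alternating row shifts.)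
\<close>

type_synonym vtx = "int \<times> int"
type_synonym face = "int \<times> int"

definition bw_adj :: "vtx \<Rightarrow> vtx \<Rightarrow> bool" where
  "bw_adj p q \<longleftrightarrow>
     (snd p = snd q \<and> \<bar>fst p - fst q\<bar> = 1) \<or>
     (fst p = fst q \<and> \<bar>snd p - snd q\<bar> = 1 \<and> even (fst p + min (snd p) (snd q)))"

text \<open>Edge of length epsilon*delta.\<close>
definition bw_short :: "vtx \<Rightarrow> vtx \<Rightarrow> bool" where
  "bw_short p q \<longleftrightarrow> snd p = snd q \<and> \<bar>fst p - fst q\<bar> = 1 \<and> even (min (fst p) (fst q))"

definition edge_vertical :: "vtx \<Rightarrow> vtx \<Rightarrow> bool" where
  "edge_vertical p q \<longleftrightarrow> fst p = fst q"

definition Faces :: "face set" where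
  "Faces = {f. even (fst f + snd f)}"

definition face_verts :: "face \<Rightarrow> vtx set" where
  "face_verts f = (case f of (x, r) \<Rightarrow>
     {(x, r), (x+1, r), (x+2, r), (x, r+1), (x+1, r+1), (x+2, r+1)})"

definition faces_at :: "vtx \<Rightarrow> face set" where
  "faces_at v = {f \<in> Faces. v \<in> face_verts f}"

text \<open>Face lying to the left / right of the directed edge p \<rightarrow> q (sign of the cross
  product of q - p with (twice the) face centre minus 2p).\<close>
definition cross_side :: "vtx \<Rightarrow> vtx \<Rightarrow> face \<Rightarrow> int" where
  "cross_side p q f =
     (fst q - fst p) * (2 * snd f + 1 - 2 * snd p) - (snd q - snd p) * (2 * fst f + 2 - 2 * fst p)"

definition left_face :: "vtx \<Rightarrow> vtx \<Rightarrow> face" where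
  "left_face p q = (THE f. f \<in> Faces \<and> p \<in> face_verts f \<and> q \<in> face_verts f \<and> cross_side p q f > 0)"

definition right_face :: "vtx \<Rightarrow> vtx \<Rightarrow> face" where
  "right_face p q = (THE f. f \<in> Faces \<and> p \<in> face_verts f \<and> q \<in> face_verts f \<and> cross_side p q f < 0)"

text \<open>Two faces are adjacent if they share an edge (equivalently two vertices).\<close>
definition face_adj :: "face \<Rightarrow> face \<Rightarrow> bool" where
  "face_adj f g \<longleftrightarrow> f \<noteq> g \<and> card (face_verts f \<inter> face_verts g) \<ge> 2"

definition face_connected :: "face set \<Rightarrow> bool" where
  "face_connected S \<longleftrightarrow>
     (\<forall>f\<in>S. \<forall>g\<in>S. (f, g) \<in> (Restr {(h, k). face_adj h k} S)\<^sup>*)"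

text \<open>A discrete (simply connected) domain: a finite nonempty edge-connected set of
  hexagons whose complement is edge-connected.\<close>
definition lattice_domain :: "face set \<Rightarrow> bool" where
  "lattice_domain D \<longleftrightarrow> D \<subseteq> Faces \<and> finite D \<and> D \<noteq> {} \<and>
     face_connected D \<and> face_connected (Faces - D)"

definition bdry_faces :: "face set \<Rightarrow> face set" where
  "bdry_faces D = {f \<in> Faces - D. \<exists>g\<in>D. face_verts f \<inter> face_verts g \<noteq> {}}"

text \<open>Boundary conditions for the exploration path from a to b: the colour function bc
  (True = black) on the hexagons outside D is such that the black boundary hexagons
  form one connected arc and the white boundary hexagons form one connected arc, and
  the two arcs meet exactly at the boundary vertices a and b (each of a, b is incident
  to a black and to a white boundary hexagon).\<close>
definition boundary_condition :: "face set \<Rightarrow> (face \<Rightarrow> bool) \<Rightarrow> vtx \<Rightarrow> vtx \<Rightarrow> bool" where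
  "boundary_condition D bc a b \<longleftrightarrow> a \<noteq> b \<and>
     face_connected {f \<in> bdry_faces D. bc f} \<and>
     face_connected {f \<in> bdry_faces D. \<not> bc f} \<and>
     (\<forall>v\<in>{a, b}. faces_at v \<inter> D \<noteq> {} \<and>
        (\<exists>f\<in>faces_at v \<inter> bdry_faces D. bc f) \<and>
        (\<exists>f\<in>faces_at v \<inter> bdry_faces D. \<not> bc f))"

text \<open>Sample space of critical site percolation on the hexagons of D
  (uniform measure = independent fair colours); colours outside D from bc.\<close>
definition configs :: "face set \<Rightarrow> (face \<Rightarrow> bool) set" where
  "configs D = PiE D (\<lambda>_. UNIV)"

definition colouring :: "face set \<Rightarrow> (face \<Rightarrow> bool) \<Rightarrow> (face \<Rightarrow> bool) \<Rightarrow> face \<Rightarrow> bool" where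
  "colouring D bc \<omega> f = (if f \<in> D then \<omega> f else bc f)"

definition cond_prob_unif :: "'a set \<Rightarrow> ('a \<Rightarrow> bool) \<Rightarrow> ('a \<Rightarrow> bool) \<Rightarrow> real" where
  "cond_prob_unif \<Omega> E C = real (card {\<omega>\<in>\<Omega>. E \<omega> \<and> C \<omega>}) / real (card {\<omega>\<in>\<Omega>. C \<omega>})"

text \<open>The exploration path keeps black hexagons on its left and white on its right:
  each step goes along the unique new edge with a black hexagon on its left and a white
  one on its right.  X 0 = a.\<close>
fun explore :: "(face \<Rightarrow> bool) \<Rightarrow> vtx \<Rightarrow> nat \<Rightarrow> vtx" where
  "explore c a 0 = a"
| "explore c a (Suc 0) =
     (THE w. bw_adj a w \<and> c (left_face a w) \<and> \<not> c (right_face a w))"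
| "explore c a (Suc (Suc n)) =
     (let u = explore c a n; v = explore c a (Suc n) in
      THE w. bw_adj v w \<and> w \<noteq> u \<and> c (left_face v w) \<and> \<not> c (right_face v w))"

definition D_edge :: "face set \<Rightarrow> vtx \<Rightarrow> vtx \<Rightarrow> bool" where
  "D_edge D p q \<longleftrightarrow> bw_adj p q \<and> (\<exists>f\<in>D. p \<in> face_verts f \<and> q \<in> face_verts f)"

definition lattice_path_in :: "face set \<Rightarrow> vtx list \<Rightarrow> bool" where
  "lattice_path_in D ps \<longleftrightarrow> ps \<noteq> [] \<and> (\<forall>i. Suc i < length ps \<longrightarrow> D_edge D (ps ! i) (ps ! Suc i))"

definition simple_path_from_to :: "face set \<Rightarrow> vtx \<Rightarrow> vtx \<Rightarrow> vtx list \<Rightarrow> bool" where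
  "simple_path_from_to D a b ps \<longleftrightarrow>
     lattice_path_in D ps \<and> distinct ps \<and> hd ps = a \<and> last ps = b"

definition interior_vertex :: "face set \<Rightarrow> vtx \<Rightarrow> bool" where
  "interior_vertex D v \<longleftrightarrow> faces_at v \<subseteq> D"

definition Vprime :: "vtx \<Rightarrow> vtx" where
  "Vprime v = (THE w. bw_adj v w \<and> bw_short v w)"

text \<open>P_V : remaining neighbour of V (given the second-last vertex V'').\<close>
definition P_of :: "vtx \<Rightarrow> vtx \<Rightarrow> vtx" where
  "P_of v2 v = (THE w. bw_adj v w \<and> w \<noteq> v2 \<and> w \<noteq> Vprime v)"

definition R_of :: "vtx \<Rightarrow> vtx \<Rightarrow> vtx" where
  "R_of v2 v = (THE w. bw_adj (Vprime v) w \<and> w \<noteq> v \<and>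
                  (edge_vertical (Vprime v) w \<longleftrightarrow> edge_vertical v2 v))"

definition Q_of :: "vtx \<Rightarrow> vtx \<Rightarrow> vtx" where
  "Q_of v2 v = (THE w. bw_adj (Vprime v) w \<and> w \<noteq> v \<and>
                  (edge_vertical (Vprime v) w \<longleftrightarrow> \<not> edge_vertical v2 v))"

definition leaves_unblocked :: "face set \<Rightarrow> vtx \<Rightarrow> vtx \<Rightarrow> vtx list \<Rightarrow> bool" where
  "leaves_unblocked D a b gam \<longleftrightarrow>
     length gam \<ge> 2 \<and> hd gam = a \<and> distinct gam \<and> lattice_path_in D gam \<and>
     (let v = last gam; v2 = last (butlast gam) in
       interior_vertex D v \<and> \<not> bw_short v2 v \<and>
       (\<forall>cont \<in> {[P_of v2 v], [Vprime v, Q_of v2 v], [Vprime v, R_of v2 v]}.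
          \<exists>rest. simple_path_from_to D a b (gam @ cont @ rest)))"

definition unblocked_at :: "face set \<Rightarrow> vtx \<Rightarrow> vtx \<Rightarrow> (face \<Rightarrow> bool) \<Rightarrow> nat \<Rightarrow> bool" where
  "unblocked_at D a b c j \<longleftrightarrow> leaves_unblocked D a b (map (explore c a) [0..<Suc j])"

end

theory Submission
  imports Defs
begin

lemma adj_iff: "bw_adj (x,r) q \<longleftrightarrow> q = (x-1,r) \<or> q = (x+1,r) \<or> q = (x, if even (x+r) then r+1 else r-1)"
  apply (cases q) apply (auto simp: bw_adj_def abs_if split: if_splits)
  apply presburger+
  done

lemma adj_sym: "bw_adj p q \<Longrightarrow> bw_adj q p"
  by (auto simp: bw_adj_def min.commute abs_minus_commute)

lemma adj_neq: "bw_adj p q \<Longrightarrow> p \<noteq> q"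
  by (auto simp: bw_adj_def)

definition FA :: "vtx \<Rightarrow> face set" where
  "FA v = (case v of (x,r) \<Rightarrow> if even (x+r) then {(x-2,r),(x,r),(x-1,r-1)} else {(x-1,r),(x-2,r-1),(x,r-1)})"

lemma faces_at_eq: "faces_at v = FA v"
proof -
  obtain x r where v: "v = (x,r)" by (cases v)
  show ?thesis unfolding v faces_at_def FA_def Faces_def face_verts_def
    apply (rule set_eqI) apply (case_tac xa) apply (auto split: if_splits)
    done
qed

lemma in_faces_at: "f \<in> faces_at v \<longleftrightarrow> f \<in> Faces \<and> v \<in> face_verts f"
  by (simp add: faces_at_def)

definition LF :: "vtx \<Rightarrow> vtx \<Rightarrow> face" where
 "LF p q = (case p of (x,r) \<Rightarrow>
   if q = (x+1,r) then (if even(x+r) then (x,r) else (x-1,r))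
   else if q = (x-1,r) then (if even(x+r) then (x-1,r-1) else (x-2,r-1))
   else if q = (x,r+1) then (x-2,r)
   else (x,r-1))"

definition RF :: "vtx \<Rightarrow> vtx \<Rightarrow> face" where
 "RF p q = (case p of (x,r) \<Rightarrow>
   if q = (x+1,r) then (if even(x+r) then (x-1,r-1) else (x,r-1))
   else if q = (x-1,r) then (if even(x+r) then (x-2,r) else (x-1,r))
   else if q = (x,r+1) then (x,r)
   else (x-2,r-1))"

lemma fv_mem: "(a,b) \<in> face_verts (x,r) \<longleftrightarrow> (b = r \<or> b = r+1) \<and> (a = x \<or> a = x+1 \<or> a = x+2)"
  by (auto simp: face_verts_def)

lemma LF_char:
  assumes "bw_adj p q"
  shows "(f \<in> Faces \<and> p \<in> face_verts f \<and> q \<in> face_verts f \<and> cross_side p q f > 0) \<longleftrightarrow> f = LF p q"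
proof -
  obtain x r where p: "p = (x,r)" by (cases p)
  have A: "f \<in> Faces \<and> p \<in> face_verts f \<longleftrightarrow> f \<in> FA p"
    using faces_at_eq[of p] by (auto simp: faces_at_def)
  show ?thesis using assms unfolding p
    apply (subst conj_assoc[symmetric]) apply (subst A[unfolded p])
    apply (cases f) apply (cases "even (x+r)")
    apply (simp_all add: adj_iff)
    apply (elim disjE; auto simp: FA_def LF_def fv_mem cross_side_def)+
    done
qed

lemma RF_char:
  assumes "bw_adj p q"
  shows "(f \<in> Faces \<and> p \<in> face_verts f \<and> q \<in> face_verts f \<and> cross_side p q f < 0) \<longleftrightarrow> f = RF p q"
proof -
  obtain x r where p: "p = (x,r)" by (cases p)
  have A: "f \<in> Faces \<and> p \<in> face_verts f \<longleftrightarrow> f \<in> FA p"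
    using faces_at_eq[of p] by (auto simp: faces_at_def)
  show ?thesis using assms unfolding p
    apply (subst conj_assoc[symmetric]) apply (subst A[unfolded p])
    apply (cases f) apply (cases "even (x+r)")
    apply (simp_all add: adj_iff)
    apply (elim disjE; auto simp: FA_def RF_def fv_mem cross_side_def)+
    done
qed

lemma edge_faces:
  assumes "bw_adj p q"
  shows "(f \<in> Faces \<and> p \<in> face_verts f \<and> q \<in> face_verts f) \<longleftrightarrow> f = LF p q \<or> f = RF p q"
proof -
  obtain x r where p: "p = (x,r)" by (cases p)
  have A: "f \<in> Faces \<and> p \<in> face_verts f \<longleftrightarrow> f \<in> FA p"
    using faces_at_eq[of p] by (auto simp: faces_at_def)
  show ?thesis using assms unfolding p
    apply (subst conj_assoc[symmetric]) apply (subst A[unfolded p])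
    apply (cases f) apply (cases "even (x+r)")
    apply (simp_all add: adj_iff)
    apply (elim disjE; auto simp: FA_def LF_def RF_def fv_mem)+
    done
qed

lemma LF_neq_RF: "bw_adj p q \<Longrightarrow> LF p q \<noteq> RF p q"
  apply (cases p) apply (simp add: adj_iff)
  apply (auto simp: LF_def RF_def split: if_splits)
  done

lemma left_face_eq: "bw_adj p q \<Longrightarrow> left_face p q = LF p q"
  unfolding left_face_def using LF_char by (simp add: conj_assoc)

lemma right_face_eq: "bw_adj p q \<Longrightarrow> right_face p q = RF p q"
  unfolding right_face_def using RF_char by (simp add: conj_assoc)

lemma LF_swap: "bw_adj p q \<Longrightarrow> LF q p = RF p q"
  apply (cases p) apply (simp add: adj_iff)
  apply (auto simp: LF_def RF_def split: if_splits)
  done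

lemma RF_swap: "bw_adj p q \<Longrightarrow> RF q p = LF p q"
  apply (cases p) apply (simp add: adj_iff)
  apply (auto simp: LF_def RF_def split: if_splits)
  done


lemma turn:
  assumes "bw_adj u v"
  shows "\<exists>wL wR F. F \<in> Faces \<and> faces_at v = {LF u v, RF u v, F} \<and> LF u v \<noteq> RF u v \<and> F \<noteq> LF u v \<and> F \<noteq> RF u v \<and>
     u \<notin> face_verts F \<and> (\<forall>w. (bw_adj v w \<and> w \<noteq> u) \<longleftrightarrow> (w = wL \<or> w = wR)) \<and> wL \<noteq> wR \<and>
     LF v wL = LF u v \<and> RF v wL = F \<and> LF v wR = F \<and> RF v wR = RF u v"
proof -
  obtain x r where v: "v = (x,r)" by (cases v)
  have "bw_adj v u" using assms adj_sym by blast
  hence u: "u = (x-1,r) \<or> u = (x+1,r) \<or> u = (x, if even (x+r) then r+1 else r-1)"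
    unfolding v adj_iff .
  show ?thesis
  proof (cases "even (x+r)")
    case True
    have e1: "even (x-1+r) = False" "even (x+1+r) = False" "even (x+(r+1)) = False" "even (x - 2 + r) = True"
      "even (x + 1 + (r + 1)) = True" "even (x - 1 + (r + 1)) = True" "even (x-1+(r-1)) = True"
      using True by presburger+
    from u True consider "u = (x-1,r)" | "u = (x+1,r)" | "u = (x,r+1)" by auto
    then show ?thesis
    proof cases
      case 1
      show ?thesis
        apply (rule exI[of _ "(x,r+1)"], rule exI[of _ "(x+1,r)"], rule exI[of _ "(x,r)"])
        using True unfolding 1 v by (auto simp: LF_def RF_def faces_at_eq FA_def adj_iff face_verts_def Faces_def e1)
    next
      case 2
      show ?thesis
        apply (rule exI[of _ "(x-1,r)"], rule exI[of _ "(x,r+1)"], rule exI[of _ "(x-2,r)"])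
        using True unfolding 2 v by (auto simp: LF_def RF_def faces_at_eq FA_def adj_iff face_verts_def Faces_def e1)
    next
      case 3
      show ?thesis
        apply (rule exI[of _ "(x+1,r)"], rule exI[of _ "(x-1,r)"], rule exI[of _ "(x-1,r-1)"])
        using True unfolding 3 v by (auto simp: LF_def RF_def faces_at_eq FA_def adj_iff face_verts_def Faces_def e1)
    qed
  next
    case False
    have e1: "even (x-1+r) = True" "even (x+1+r) = True" "even (x+(r-1)) = True" "even (x - 2 + (r-1)) = True"
      "even (x + 1 + (r - 1)) = False" "even (x - 1 + (r - 1)) = False" "even (x-1+(r-1)) = False" "even (x+r) = False"
      "even (x - 1 + r) = True"
      using False by presburger+
    from u False consider "u = (x-1,r)" | "u = (x+1,r)" | "u = (x,r-1)" by auto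
    then show ?thesis
    proof cases
      case 1
      show ?thesis
        apply (rule exI[of _ "(x+1,r)"], rule exI[of _ "(x,r-1)"], rule exI[of _ "(x,r-1)"])
        using False unfolding 1 v by (auto simp: LF_def RF_def faces_at_eq FA_def adj_iff face_verts_def Faces_def e1)
    next
      case 2
      show ?thesis
        apply (rule exI[of _ "(x,r-1)"], rule exI[of _ "(x-1,r)"], rule exI[of _ "(x-2,r-1)"])
        using False unfolding 2 v by (auto simp: LF_def RF_def faces_at_eq FA_def adj_iff face_verts_def Faces_def e1)
    next
      case 3
      show ?thesis
        apply (rule exI[of _ "(x-1,r)"], rule exI[of _ "(x+1,r)"], rule exI[of _ "(x-1,r)"])
        using False unfolding 3 v by (auto simp: LF_def RF_def faces_at_eq FA_def adj_iff face_verts_def Faces_def e1)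
    qed
  qed
qed


fun steps :: "'a list \<Rightarrow> ('a \<times> 'a) list" where
  "steps (x # y # zs) = (x,y) # steps (y # zs)"
| "steps _ = []"

lemma steps_mem: "st \<in> set (steps W) \<Longrightarrow> fst st \<in> set W \<and> snd st \<in> set W"
  by (induction W rule: steps.induct) auto

lemma steps_append: "xs \<noteq> [] \<Longrightarrow> steps (xs @ ys) = steps xs @ (if ys = [] then [] else (last xs, hd ys) # steps ys)"
proof (induction xs)
  case Nil then show ?case by simp
next
  case (Cons x xs)
  show ?case
  proof (cases xs)
    case Nil then show ?thesis by (cases ys) auto
  next
    case (Cons y zs)
    then show ?thesis using Cons.IH by simp
  qed
qed

lemma steps_join: "xs \<noteq> [] \<Longrightarrow> ys \<noteq> [] \<Longrightarrow> last xs = hd ys \<Longrightarrow> steps (xs @ tl ys) = steps xs @ steps ys"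
  by (cases ys; cases "tl ys") (auto simp: steps_append)

lemma switch_even:
  "xs \<noteq> [] \<Longrightarrow> even (length (filter (\<lambda>st. (fst st \<in> S) \<noteq> (snd st \<in> S)) (steps xs))) \<longleftrightarrow> ((hd xs \<in> S) \<longleftrightarrow> (last xs \<in> S))"
  by (induction xs rule: steps.induct) auto

lemma len_filter_disj:
  "(\<And>x. \<not> (P x \<and> Q x)) \<Longrightarrow> length (filter (\<lambda>x. P x \<or> Q x) xs) = length (filter P xs) + length (filter Q xs)"
  by (induction xs) auto

definition cntE :: "vtx list \<Rightarrow> vtx \<Rightarrow> vtx \<Rightarrow> nat" where
  "cntE W p q = length (filter (\<lambda>st. st = (p,q) \<or> st = (q,p)) (steps W))"

definition hcol :: "int \<Rightarrow> int \<Rightarrow> vtx \<times> vtx \<Rightarrow> bool" where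
  "hcol k r st \<longleftrightarrow> snd (fst st) = snd (snd st) \<and> snd (fst st) \<le> r \<and>
      ((fst (fst st) = k \<and> fst (snd st) = k+1) \<or> (fst (fst st) = k+1 \<and> fst (snd st) = k))"

definition cntH :: "vtx list \<Rightarrow> int \<Rightarrow> int \<Rightarrow> nat" where
  "cntH W k r = length (filter (hcol k r) (steps W))"

definition piW :: "vtx list \<Rightarrow> face \<Rightarrow> bool" where
  "piW W f = odd (cntH W (fst f + 1) (snd f))"

definition walk_adj :: "vtx list \<Rightarrow> bool" where
  "walk_adj W \<longleftrightarrow> (\<forall>st\<in>set (steps W). bw_adj (fst st) (snd st))"

definition closed_walk :: "vtx list \<Rightarrow> bool" where
  "closed_walk W \<longleftrightarrow> W \<noteq> [] \<and> hd W = last W \<and> walk_adj W"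

lemma cntE_sym: "cntE W p q = cntE W q p"
  unfolding cntE_def by meson

definition Col :: "int \<Rightarrow> int \<Rightarrow> vtx set" where
  "Col k r = {(k,r') | r'. r' \<le> r}"

lemma col_switch:
  assumes "bw_adj (fst st) (snd st)"
  shows "((fst st \<in> Col k r) \<noteq> (snd st \<in> Col k r)) \<longleftrightarrow>
     (hcol (k-1) r st \<or> hcol k r st) \<or> (even (k+r) \<and> (st = ((k,r),(k,r+1)) \<or> st = ((k,r+1),(k,r))))"
proof -
  obtain a b c d where st: "st = ((a,b),(c,d))" by (metis prod.exhaust)
  have cm: "(u,w) \<in> Col k r \<longleftrightarrow> u = k \<and> w \<le> r" for u w by (auto simp: Col_def)
  have "(c,d) = (a-1,b) \<or> (c,d) = (a+1,b) \<or> (c,d) = (a, if even (a+b) then b+1 else b-1)"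
    using assms adj_iff[of a b "(c,d)"] unfolding st by simp
  then consider "c = a+1" "d = b" | "c = a-1" "d = b" | "even (a+b)" "c = a" "d = b+1" | "odd (a+b)" "c = a" "d = b-1"
    by (auto split: if_splits)
  then show ?thesis
  proof cases
    case 1 then show ?thesis unfolding st hcol_def by (auto simp add: cm)
  next
    case 2 then show ?thesis unfolding st hcol_def by (auto simp add: cm)
  next
    case 3
    have e: "a = k \<Longrightarrow> b \<le> r \<Longrightarrow> \<not> b + 1 \<le> r \<Longrightarrow> even (k+r)" using 3(1) by presburger
    show ?thesis using 3 e unfolding st hcol_def by (auto simp add: cm)
  next
    case 4
    have e: "a = k \<Longrightarrow> b = r+1 \<Longrightarrow> even (k+r)" using 4(1) by presburger
    show ?thesis using 4 e unfolding st hcol_def by (auto simp add: cm)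
  qed
qed

lemma col_even:
  assumes "closed_walk W"
  shows "even (cntH W (k-1) r + cntH W k r + (if even (k+r) then cntE W (k,r) (k,r+1) else 0))"
proof -
  let ?S = "Col k r"
  have sw: "even (length (filter (\<lambda>st. (fst st \<in> ?S) \<noteq> (snd st \<in> ?S)) (steps W)))"
    using assms switch_even[of W ?S] unfolding closed_walk_def by simp
  let ?A = "hcol (k-1) r"
  let ?B = "hcol k r"
  let ?C = "\<lambda>st. even (k+r) \<and> (st = ((k,r),(k,r+1)) \<or> st = ((k,r+1),(k,r)))"
  have eq: "filter (\<lambda>st. (fst st \<in> ?S) \<noteq> (snd st \<in> ?S)) (steps W) = filter (\<lambda>st. (?A st \<or> ?B st) \<or> ?C st) (steps W)"
    apply (rule filter_cong[OF refl])
    using assms col_switch unfolding closed_walk_def walk_adj_def by blast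
  have d1: "\<not> ((?A st \<or> ?B st) \<and> ?C st)" for st
    by (auto simp: hcol_def)
  have d2: "\<not> (?A st \<and> ?B st)" for st
    by (auto simp: hcol_def)
  have l1: "length (filter (\<lambda>st. (?A st \<or> ?B st) \<or> ?C st) (steps W)) =
        length (filter (\<lambda>st. ?A st \<or> ?B st) (steps W)) + length (filter ?C (steps W))"
    by (rule len_filter_disj) (use d1 in blast)
  have l2: "length (filter (\<lambda>st. ?A st \<or> ?B st) (steps W)) =
        length (filter ?A (steps W)) + length (filter ?B (steps W))"
    by (rule len_filter_disj) (use d2 in blast)
  have "length (filter ?C (steps W)) = (if even (k+r) then cntE W (k,r) (k,r+1) else 0)"
    by (simp add: cntE_def)
  then show ?thesis using sw eq l1 l2 by (simp add: cntH_def)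
qed

lemma cntH_split: "cntH W k r = cntH W k (r-1) + cntE W (k,r) (k+1,r)"
proof -
  let ?A = "hcol k (r-1)"
  let ?B = "\<lambda>st. st = ((k,r),(k+1,r)) \<or> st = ((k+1,r),(k,r))"
  have d: "\<not> (?A st \<and> ?B st)" for st by (auto simp: hcol_def)
  have "hcol k r = (\<lambda>st. ?A st \<or> ?B st)"
    by (rule ext) (auto simp: hcol_def)
  then show ?thesis unfolding cntH_def cntE_def using len_filter_disj[of ?A ?B, OF d] by simp
qed

lemma core_a:
  assumes "closed_walk W" "even (k+r)"
  shows "odd (cntH W (k+1) r) \<noteq> odd (cntH W k (r-1)) \<longleftrightarrow> odd (cntE W (k,r) (k+1,r))"
proof -
  have o: "\<not> even (k+1+r)" using assms(2) by presburger
  have "even (cntH W k r + cntH W (k+1) r)"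
    using col_even[OF assms(1), of "k+1" r] o by simp
  then show ?thesis using cntH_split[of W k r] by presburger
qed

lemma core_b:
  assumes "closed_walk W" "odd (k+r)"
  shows "odd (cntH W k r) \<noteq> odd (cntH W (k+1) (r-1)) \<longleftrightarrow> odd (cntE W (k,r) (k+1,r))"
proof -
  have o: "\<not> even (k+1+(r-1))" using assms(2) by presburger
  have "even (cntH W k (r-1) + cntH W (k+1) (r-1))"
    using col_even[OF assms(1), of "k+1" "r-1"] o by simp
  then show ?thesis using cntH_split[of W k r] by presburger
qed

lemma core_c:
  assumes "closed_walk W" "even (k+r)"
  shows "odd (cntH W (k-1) r) \<noteq> odd (cntH W (k+1) r) \<longleftrightarrow> odd (cntE W (k,r) (k,r+1))"
proof -
  have o: "\<not> even (k+1+r)" using assms(2) by presburger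
  have 1: "even (cntH W (k-1) r + cntH W k r + cntE W (k,r) (k,r+1))"
    using col_even[OF assms(1), of k r] assms(2) by simp
  have 2: "even (cntH W k r + cntH W (k+1) r)"
    using col_even[OF assms(1), of "k+1" r] o by simp
  show ?thesis using 1 2 by presburger
qed

lemma edge_parity:
  assumes "closed_walk W" "bw_adj p q"
  shows "piW W (LF p q) \<noteq> piW W (RF p q) \<longleftrightarrow> odd (cntE W p q)"
proof -
  obtain x r where p: "p = (x,r)" by (cases p)
  have q: "q = (x-1,r) \<or> q = (x+1,r) \<or> q = (x, if even (x+r) then r+1 else r-1)"
    using assms(2) unfolding p adj_iff .
  show ?thesis
  proof (cases "even (x+r)")
    case True
    from q True consider "q = (x+1,r)" | "q = (x-1,r)" | "q = (x,r+1)" by auto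
    then show ?thesis
    proof cases
      case 1
      have l: "LF p q = (x, r)" "RF p q = (x-1,r-1)" using True 1 by (simp_all add: p LF_def RF_def)
      show ?thesis unfolding l piW_def using core_a[OF assms(1) True] 1 p by simp
    next
      case 2
      have o: "odd (x-1+r)" using True by presburger
      have l: "LF p q = (x-1, r-1)" "RF p q = (x-2,r)" using True 2 by (simp_all add: p LF_def RF_def)
      have h: "odd (cntH W (x-1) r) \<noteq> odd (cntH W (x-1+1) (r-1)) \<longleftrightarrow> odd (cntE W (x-1,r) (x-1+1,r))"
        using core_b[OF assms(1) o] .
      show ?thesis unfolding l piW_def using h cntE_sym[of W p q] 2 p by auto
    next
      case 3
      have l: "LF p q = (x-2, r)" "RF p q = (x,r)" using True 3 by (simp_all add: p LF_def RF_def)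
      show ?thesis unfolding l piW_def using core_c[OF assms(1) True] 3 p by auto
    qed
  next
    case False
    from q False consider "q = (x+1,r)" | "q = (x-1,r)" | "q = (x,r-1)" by auto
    then show ?thesis
    proof cases
      case 1
      have o: "odd (x+r)" using False by presburger
      have l: "LF p q = (x-1, r)" "RF p q = (x,r-1)" using False 1 by (simp_all add: p LF_def RF_def)
      show ?thesis unfolding l piW_def using core_b[OF assms(1) o] 1 p by simp
    next
      case 2
      have o: "even (x-1+r)" using False by presburger
      have l: "LF p q = (x-2, r-1)" "RF p q = (x-1,r)" using False 2 by (simp_all add: p LF_def RF_def)
      have h: "odd (cntH W (x-1+1) r) \<noteq> odd (cntH W (x-1) (r-1)) \<longleftrightarrow> odd (cntE W (x-1,r) (x-1+1,r))"
        using core_a[OF assms(1) o] .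
      show ?thesis unfolding l piW_def using h cntE_sym[of W p q] 2 p by auto
    next
      case 3
      have o: "even (x+(r-1))" using False by presburger
      have h: "odd (cntH W (x-1) (r-1)) \<noteq> odd (cntH W (x+1) (r-1)) \<longleftrightarrow> odd (cntE W (x,r-1) (x,r-1+1))"
        using core_c[OF assms(1) o] .
      have l: "LF p q = (x, r-1)" "RF p q = (x-2,r-1)" using False 3 by (simp_all add: p LF_def RF_def)
      show ?thesis unfolding l piW_def using h cntE_sym[of W p q] 3 p by auto
    qed
  qed
qed


lemma steps_zip: "steps xs = zip xs (tl xs)"
  by (induction xs rule: steps.induct) auto

lemma steps_nth: "set (steps xs) = {(xs!i, xs!Suc i) | i. Suc i < length xs}"
  unfolding steps_zip set_zip by (auto simp: nth_tl)

lemma walk_adj_nth: "walk_adj xs \<longleftrightarrow> (\<forall>i. Suc i < length xs \<longrightarrow> bw_adj (xs!i) (xs!Suc i))"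
  unfolding walk_adj_def steps_nth
  apply (intro iffI allI impI ballI)
  subgoal for i by (drule bspec[of _ _ "(xs!i, xs!Suc i)"]) auto
  subgoal for st by auto
  done

lemma lattice_path_steps: "lattice_path_in D ps \<Longrightarrow> st \<in> set (steps ps) \<Longrightarrow> D_edge D (fst st) (snd st)"
  unfolding lattice_path_in_def steps_nth by auto

lemma lattice_path_walk: "lattice_path_in D ps \<Longrightarrow> walk_adj ps"
  unfolding lattice_path_in_def walk_adj_nth D_edge_def by auto

lemma walk_adj_drop: "walk_adj xs \<Longrightarrow> walk_adj (drop k xs)"
  unfolding walk_adj_nth by auto

lemma walk_adj_take: "walk_adj xs \<Longrightarrow> walk_adj (take k xs)"
  unfolding walk_adj_nth by auto

lemma walk_adj_join: "xs \<noteq> [] \<Longrightarrow> ys \<noteq> [] \<Longrightarrow> last xs = hd ys \<Longrightarrow> walk_adj xs \<Longrightarrow> walk_adj ys \<Longrightarrow> walk_adj (xs @ tl ys)"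
  unfolding walk_adj_def by (auto simp: steps_join)

definition Vp :: "vtx \<Rightarrow> vtx" where
  "Vp v = (if even (fst v) then (fst v + 1, snd v) else (fst v - 1, snd v))"

lemma short_iff: "bw_short p q \<longleftrightarrow> q = Vp p"
  apply (cases p; cases q)
  apply (auto simp: bw_short_def Vp_def abs_if split: if_splits)
  apply presburger+
  done

lemma short_adj: "bw_short p q \<Longrightarrow> bw_adj p q"
  by (auto simp: bw_short_def bw_adj_def)

lemma short_sym: "bw_short p q \<Longrightarrow> bw_short q p"
  by (auto simp: bw_short_def min.commute abs_minus_commute)

lemma Vprime_eq: "Vprime v = Vp v"
  unfolding Vprime_def
  apply (rule the_equality)
  using short_adj short_iff apply blast
  using short_iff by blast

lemma Vp_adj: "bw_adj v (Vp v)"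
  using short_adj short_iff by blast

lemma Vp_short: "bw_short v (Vp v)"
  using short_iff by blast

lemma Vp_Vp: "Vp (Vp v) = v"
  by (cases v) (auto simp: Vp_def)

lemma Vp_horiz: "fst (Vp v) \<noteq> fst v"
  by (auto simp: Vp_def)

lemma vert_nbr: "\<exists>!w. bw_adj v w \<and> fst w = fst v"
proof -
  obtain x r where v: "v = (x,r)" by (cases v)
  show ?thesis unfolding v
  proof (rule ex1I[of _ "(x, if even (x+r) then r+1 else r-1)"])
    show "bw_adj (x,r) (x, if even (x+r) then r+1 else r-1) \<and> fst (x, if even (x+r) then r+1 else r-1) = fst (x,r)"
      by (simp add: adj_iff)
  next
    fix w assume "bw_adj (x,r) w \<and> fst w = fst (x,r)"
    then show "w = (x, if even (x+r) then r+1 else r-1)" unfolding adj_iff by (cases w) auto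
  qed
qed

lemma fv_mem2: "(a,b) \<in> face_verts (x,r) \<longleftrightarrow> (b = r \<or> b = r+1) \<and> (a = x \<or> a = x+1 \<or> a = x+2)"
  by (auto simp: face_verts_def)

lemma edge_common:
  assumes "bw_adj s z" "t \<in> face_verts (LF s z)" "t \<in> face_verts (RF s z)"
  shows "t = s \<or> t = z"
proof -
  obtain x r where s: "s = (x,r)" by (cases s)
  obtain a b where t: "t = (a,b)" by (cases t)
  have "z = (x-1,r) \<or> z = (x+1,r) \<or> z = (x, if even (x+r) then r+1 else r-1)"
    using assms(1) unfolding s adj_iff .
  then consider "z = (x+1,r)" "even (x+r)" | "z = (x+1,r)" "odd (x+r)" | "z = (x-1,r)" "even (x+r)" | "z = (x-1,r)" "odd (x+r)"
     | "z = (x,r+1)" "even (x+r)" | "z = (x,r-1)" "odd (x+r)"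
    by (auto split: if_splits)
  then show ?thesis
    using assms(2,3) unfolding s t
    by cases (auto simp: LF_def RF_def fv_mem2)
qed

lemma two_faces_edge:
  assumes "h1 \<in> faces_at w" "h2 \<in> faces_at w" "h1 \<noteq> h2"
  shows "\<exists>z. bw_adj w z \<and> {h1,h2} = {LF w z, RF w z}"
proof -
  obtain x r where w: "w = (x,r)" by (cases w)
  define u where "u = (x+1,r)"
  have uw: "bw_adj u w" unfolding u_def w by (simp add: adj_sym adj_iff)
  have wu: "bw_adj w u" using uw adj_sym by blast
  obtain wL wR F where T: "F \<in> Faces" "faces_at w = {LF u w, RF u w, F}" "LF u w \<noteq> RF u w"
     "F \<noteq> LF u w" "F \<noteq> RF u w" "\<forall>v. (bw_adj w v \<and> v \<noteq> u) \<longleftrightarrow> (v = wL \<or> v = wR)" "wL \<noteq> wR"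
     "LF w wL = LF u w" "RF w wL = F" "LF w wR = F" "RF w wR = RF u w"
    using turn[OF uw] by blast
  have aL: "bw_adj w wL" "bw_adj w wR" using T(6)[rule_format, of wL] T(6)[rule_format, of wR] by auto
  have s1: "LF w u = RF u w" "RF w u = LF u w" using LF_swap[OF uw] RF_swap[OF uw] by auto
  have e1: "{LF w u, RF w u} = {LF u w, RF u w}" using s1 by auto
  have e2: "{LF w wL, RF w wL} = {LF u w, F}" using T by auto
  have e3: "{LF w wR, RF w wR} = {F, RF u w}" using T by auto
  have m1: "h1 = LF u w \<or> h1 = RF u w \<or> h1 = F" using assms(1) T(2) by blast
  have m2: "h2 = LF u w \<or> h2 = RF u w \<or> h2 = F" using assms(2) T(2) by blast
  have "{h1,h2} = {LF u w, RF u w} \<or> {h1,h2} = {LF u w, F} \<or> {h1,h2} = {F, RF u w}"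
    using m1 m2 assms(3) by (elim disjE) (simp_all add: insert_commute)
  then show ?thesis
  proof (elim disjE)
    assume "{h1,h2} = {LF u w, RF u w}" then show ?thesis using e1 wu by metis
  next
    assume "{h1,h2} = {LF u w, F}" then show ?thesis using e2 aL by metis
  next
    assume "{h1,h2} = {F, RF u w}" then show ?thesis using e3 aL by metis
  qed
qed

lemma faces_share2:
  assumes "f \<in> Faces" "g \<in> Faces" "f \<noteq> g" "s \<in> face_verts f" "s \<in> face_verts g"
    "t \<in> face_verts f" "t \<in> face_verts g" "s \<noteq> t"
  shows "bw_adj s t"
proof -
  have "f \<in> faces_at s" "g \<in> faces_at s" using assms by (auto simp: faces_at_def)
  then obtain z where z: "bw_adj s z" "{f,g} = {LF s z, RF s z}"
    using two_faces_edge assms(3) by blast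
  have "t \<in> face_verts (LF s z) \<and> t \<in> face_verts (RF s z)" using z(2) assms(6,7) by (auto simp: doubleton_eq_iff)
  then have "t = s \<or> t = z" using edge_common[OF z(1)] by blast
  then show ?thesis using z(1) assms(8) by auto
qed


lemma face_walk:
  assumes "f \<in> Faces" "s \<in> face_verts f" "t \<in> face_verts f"
  shows "\<exists>ws. ws \<noteq> [] \<and> hd ws = s \<and> last ws = t \<and> walk_adj ws \<and> set ws \<subseteq> face_verts f"
proof -
  obtain x r where f: "f = (x,r)" by (cases f)
  have ev: "even (x+r)" using assms(1) f by (simp add: Faces_def)
  define cyc where "cyc = [(x,r),(x+1,r),(x+2,r),(x+2,r+1),(x+1,r+1),(x,r+1),(x,r)]"
  have e2: "even (x+2+r)" "odd (x+1+r)" "even (x+1+(r+1))" "odd (x+(r+1))" "odd (x+2+(r+1))" using ev by presburger+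
  have a1: "bw_adj (x,r) (x+1,r)" "bw_adj (x+1,r) (x+2,r)" "bw_adj (x+2,r) (x+2,r+1)"
     "bw_adj (x+2,r+1) (x+1,r+1)" "bw_adj (x+1,r+1) (x,r+1)" "bw_adj (x,r+1) (x,r)"
    using ev e2 by (simp_all add: adj_iff)
  have sc0: "steps cyc = [((x,r),(x+1,r)),((x+1,r),(x+2,r)),((x+2,r),(x+2,r+1)),((x+2,r+1),(x+1,r+1)),((x+1,r+1),(x,r+1)),((x,r+1),(x,r))]"
    by (simp add: cyc_def)
  have wc: "walk_adj cyc"
    unfolding walk_adj_def sc0 using a1 by simp
  have sc: "set cyc = face_verts f" unfolding cyc_def f face_verts_def by auto
  have lc: "last cyc = (x,r)" "hd cyc = (x,r)" "cyc \<noteq> []" by (simp_all add: cyc_def)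
  obtain i where i: "i < length cyc" "cyc ! i = s" using assms(2) sc by (metis in_set_conv_nth)
  obtain j where j: "j < length cyc" "cyc ! j = t" using assms(3) sc by (metis in_set_conv_nth)
  define A where "A = drop i cyc"
  define B where "B = take (Suc j) cyc"
  have A: "A \<noteq> []" "hd A = s" "last A = (x,r)" "walk_adj A" "set A \<subseteq> set cyc"
    unfolding A_def using i wc walk_adj_drop set_drop_subset
    by (simp_all add: hd_drop_conv_nth lc)
  have B1: "B \<noteq> []" "walk_adj B" "set B \<subseteq> set cyc"
    unfolding B_def using lc(3) walk_adj_take[OF wc] set_take_subset by simp_all
  have B2: "hd B = (x,r)" unfolding B_def using lc by (cases cyc) auto
  have B3: "last B = t" unfolding B_def using j by (simp add: take_Suc_conv_app_nth)
  note B = B1(1) B2 B3 B1(2,3)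
  have l: "last (A @ tl B) = t"
  proof (cases "tl B = []")
    case True
    then have "B = [(x,r)]" using B(1,2) by (metis list.collapse)
    then show ?thesis using A(3) B(3) True by simp
  next
    case False
    then show ?thesis using B(1,3) by (simp add: last_tl)
  qed
  have tB: "set (tl B) \<subseteq> set B" by (cases B) auto
  have st: "set (A @ tl B) \<subseteq> face_verts f" using A(5) B(5) sc tB by auto
  show ?thesis
    apply (rule exI[of _ "A @ tl B"])
    using A B walk_adj_join[of A B] l st by simp
qed

lemma card_ge2: "2 \<le> card A \<Longrightarrow> \<exists>a b. a \<in> A \<and> b \<in> A \<and> a \<noteq> b"
proof -
  assume c: "2 \<le> card A"
  then have fin: "finite A" by (metis card.infinite not_numeral_le_zero)
  show ?thesis
  proof (rule ccontr)
    assume "\<not> ?thesis"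
    then have "\<forall>a\<in>A. \<forall>b\<in>A. a = b" by blast
    then have "card A \<le> Suc 0" using card_le_Suc0_iff_eq[OF fin] by blast
    then show False using c by simp
  qed
qed

lemma face_adj_edge:
  assumes "face_adj h k" "h \<in> Faces" "k \<in> Faces"
  shows "\<exists>s t. bw_adj s t \<and> {h,k} = {LF s t, RF s t}"
proof -
  have hk: "h \<noteq> k" "2 \<le> card (face_verts h \<inter> face_verts k)" using assms(1) by (auto simp: face_adj_def)
  obtain s t where st: "s \<in> face_verts h \<inter> face_verts k" "t \<in> face_verts h \<inter> face_verts k" "s \<noteq> t"
    using card_ge2[OF hk(2)] by blast
  have a: "bw_adj s t" using faces_share2[OF assms(2,3) hk(1)] st by blast
  have "h = LF s t \<or> h = RF s t" "k = LF s t \<or> k = RF s t"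
    using edge_faces[OF a, of h] edge_faces[OF a, of k] st assms by auto
  then have "{h,k} = {LF s t, RF s t}" using hk(1) by (metis insert_commute)
  then show ?thesis using a by blast
qed

lemma steps_sub: "st \<in> set (steps ws) \<Longrightarrow> set ws \<subseteq> A \<Longrightarrow> fst st \<in> A \<and> snd st \<in> A"
  using steps_mem by blast

lemma chain_walk:
  assumes "(g,h) \<in> (Restr {(h,k). face_adj h k} S)\<^sup>*" "S \<subseteq> Faces" "g \<in> S" "s \<in> face_verts g"
  shows "\<forall>t \<in> face_verts h. \<exists>ws. ws \<noteq> [] \<and> hd ws = s \<and> last ws = t \<and> walk_adj ws \<and>
     (\<forall>st\<in>set (steps ws). \<exists>g'\<in>S. fst st \<in> face_verts g' \<and> snd st \<in> face_verts g')"
  using assms(1)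
proof (induction rule: rtrancl_induct)
  case base
  show ?case
  proof
    fix t assume t: "t \<in> face_verts g"
    obtain ws where ws: "ws \<noteq> []" "hd ws = s" "last ws = t" "walk_adj ws" "set ws \<subseteq> face_verts g"
      using face_walk[OF _ assms(4) t] assms(2,3) by blast
    show "\<exists>ws. ws \<noteq> [] \<and> hd ws = s \<and> last ws = t \<and> walk_adj ws \<and>
     (\<forall>st\<in>set (steps ws). \<exists>g'\<in>S. fst st \<in> face_verts g' \<and> snd st \<in> face_verts g')"
      using ws assms(3) steps_sub[of _ ws "face_verts g"] by blast
  qed
next
  case (step y z)
  have yz: "y \<in> S" "z \<in> S" "face_adj y z" using step(2) by auto
  have "2 \<le> card (face_verts y \<inter> face_verts z)" using yz(3) by (simp add: face_adj_def)
  then obtain m where m: "m \<in> face_verts y" "m \<in> face_verts z" using card_ge2 by blast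
  show ?case
  proof
    fix t assume t: "t \<in> face_verts z"
    obtain ws1 where w1: "ws1 \<noteq> []" "hd ws1 = s" "last ws1 = m" "walk_adj ws1"
      "\<forall>st\<in>set (steps ws1). \<exists>g'\<in>S. fst st \<in> face_verts g' \<and> snd st \<in> face_verts g'"
      using step(3) m(1) by blast
    obtain ws2 where w2: "ws2 \<noteq> []" "hd ws2 = m" "last ws2 = t" "walk_adj ws2" "set ws2 \<subseteq> face_verts z"
      using face_walk[OF _ m(2) t] yz(2) assms(2) by blast
    have s2: "\<forall>st\<in>set (steps ws2). \<exists>g'\<in>S. fst st \<in> face_verts g' \<and> snd st \<in> face_verts g'"
      using w2(5) yz(2) steps_sub[of _ ws2 "face_verts z"] by blast
    have l: "last (ws1 @ tl ws2) = t"
    proof (cases "tl ws2 = []")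
      case True
      then have "ws2 = [m]" using w2(1,2) by (metis list.collapse)
      then show ?thesis using w1(3) w2(3) True by simp
    next
      case False
      then show ?thesis using w2(1,3) by (simp add: last_tl)
    qed
    have wa: "walk_adj (ws1 @ tl ws2)" using walk_adj_join[of ws1 ws2] w1 w2 by simp
    have ss: "set (steps (ws1 @ tl ws2)) = set (steps ws1) \<union> set (steps ws2)"
      using steps_join[of ws1 ws2] w1 w2 by simp
    have hh: "hd (ws1 @ tl ws2) = s" "ws1 @ tl ws2 \<noteq> []" using w1 by auto
    show "\<exists>ws. ws \<noteq> [] \<and> hd ws = s \<and> last ws = t \<and> walk_adj ws \<and>
     (\<forall>st\<in>set (steps ws). \<exists>g'\<in>S. fst st \<in> face_verts g' \<and> snd st \<in> face_verts g')"
      apply (rule exI[of _ "ws1 @ tl ws2"])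
      unfolding ss using hh l wa w1(5) s2 by blast
  qed
qed

lemma len_filter_ex: "length (filter P xs) \<noteq> 0 \<Longrightarrow> \<exists>x\<in>set xs. P x"
  by (induction xs) (auto split: if_splits)

lemma compl_const:
  assumes "closed_walk W" "\<forall>st\<in>set (steps W). \<exists>h\<in>D. fst st \<in> face_verts h \<and> snd st \<in> face_verts h"
    "D \<subseteq> Faces" "(f,g) \<in> (Restr {(h,k). face_adj h k} (Faces - D))\<^sup>*"
  shows "piW W f = piW W g"
  using assms(4)
proof (induction rule: rtrancl_induct)
  case base then show ?case by simp
next
  case (step y z)
  have yz: "y \<in> Faces - D" "z \<in> Faces - D" "face_adj y z" using step(2) by auto
  obtain s t where st: "bw_adj s t" "{y,z} = {LF s t, RF s t}" using face_adj_edge[OF yz(3)] yz by blast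
  have "cntE W s t = 0"
    unfolding cntE_def
  proof (rule ccontr)
    assume "length (filter (\<lambda>st. st = (s, t) \<or> st = (t, s)) (steps W)) \<noteq> 0"
    then have "\<exists>e\<in>set (steps W). e = (s,t) \<or> e = (t,s)" by (rule len_filter_ex)
    then obtain e where e: "e \<in> set (steps W)" "e = (s,t) \<or> e = (t,s)" by blast
    obtain h where h: "h \<in> D" "s \<in> face_verts h" "t \<in> face_verts h" using assms(2) e by auto
    have hh: "h = LF s t \<or> h = RF s t" using edge_faces[OF st(1), of h] h assms(3) by auto
    have "LF s t \<in> {y,z}" "RF s t \<in> {y,z}" using st(2) by auto
    moreover have "y \<notin> D" "z \<notin> D" using yz(1,2) by auto
    ultimately have "LF s t \<notin> D" "RF s t \<notin> D" by auto
    then show False using h(1) hh by blast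
  qed
  then have "piW W (LF s t) = piW W (RF s t)" using edge_parity[OF assms(1) st(1)] by simp
  moreover have "(y = LF s t \<and> z = RF s t) \<or> (y = RF s t \<and> z = LF s t)" using st(2) by (metis doubleton_eq_iff)
  ultimately have "piW W y = piW W z" by auto
  then show ?case using step(3) by simp
qed

lemma fv_row: "v \<in> face_verts h \<Longrightarrow> snd h \<le> snd v"
  by (cases h) (auto simp: face_verts_def)

lemma compl_zero:
  assumes "closed_walk W" "\<forall>st\<in>set (steps W). \<exists>h\<in>D. fst st \<in> face_verts h \<and> snd st \<in> face_verts h"
    "D \<subseteq> Faces" "finite D" "face_connected (Faces - D)" "f \<in> Faces - D"
  shows "\<not> piW W f"
proof -
  define m where "m = (if D = {} then 0 else Min (snd ` D))"
  have mD: "h \<in> D \<Longrightarrow> m \<le> snd h" for h using assms(4) unfolding m_def by auto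
  define g0 :: face where "g0 = (m-1, m-1)"
  have g0: "g0 \<in> Faces - D"
  proof
    show "g0 \<in> Faces" unfolding g0_def Faces_def by simp
    show "g0 \<notin> D" using mD[of g0] unfolding g0_def by auto
  qed
  have "cntH W (fst g0 + 1) (snd g0) = 0"
    unfolding cntH_def
  proof (rule ccontr)
    assume "length (filter (hcol (fst g0 + 1) (snd g0)) (steps W)) \<noteq> 0"
    then have "\<exists>e\<in>set (steps W). hcol (fst g0 + 1) (snd g0) e" by (rule len_filter_ex)
    then obtain e where e: "e \<in> set (steps W)" "hcol (fst g0 + 1) (snd g0) e" by blast
    obtain h where h: "h \<in> D" "fst e \<in> face_verts h" using assms(2) e by auto
    have "m \<le> snd (fst e)" using mD[OF h(1)] fv_row[OF h(2)] by simp
    then show False using e(2) unfolding hcol_def g0_def by simp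
  qed
  then have z: "\<not> piW W g0" by (simp add: piW_def)
  have "(f, g0) \<in> (Restr {(h,k). face_adj h k} (Faces - D))\<^sup>*"
    using assms(5,6) g0 unfolding face_connected_def by blast
  then show ?thesis using compl_const[OF assms(1,2,3)] z by simp
qed


definition turnP :: "vtx \<Rightarrow> vtx \<Rightarrow> vtx \<times> vtx \<times> face \<Rightarrow> bool" where
  "turnP u v t = (case t of (wL, wR, F) \<Rightarrow> F \<in> Faces \<and> faces_at v = {LF u v, RF u v, F} \<and> LF u v \<noteq> RF u v \<and> F \<noteq> LF u v \<and> F \<noteq> RF u v \<and>
     u \<notin> face_verts F \<and> (\<forall>w. (bw_adj v w \<and> w \<noteq> u) \<longleftrightarrow> (w = wL \<or> w = wR)) \<and> wL \<noteq> wR \<and>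
     LF v wL = LF u v \<and> RF v wL = F \<and> LF v wR = F \<and> RF v wR = RF u v)"

definition tL where "tL u v = fst (SOME t. turnP u v t)"
definition tR where "tR u v = fst (snd (SOME t. turnP u v t))"
definition tF where "tF u v = snd (snd (SOME t. turnP u v t))"

lemma turn_props:
  assumes "bw_adj u v"
  shows "tF u v \<in> Faces" "faces_at v = {LF u v, RF u v, tF u v}" "LF u v \<noteq> RF u v" "tF u v \<noteq> LF u v" "tF u v \<noteq> RF u v"
     "u \<notin> face_verts (tF u v)" "\<And>w. (bw_adj v w \<and> w \<noteq> u) \<longleftrightarrow> (w = tL u v \<or> w = tR u v)" "tL u v \<noteq> tR u v"
     "LF v (tL u v) = LF u v" "RF v (tL u v) = tF u v" "LF v (tR u v) = tF u v" "RF v (tR u v) = RF u v"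
proof -
  have "\<exists>t. turnP u v t" using turn[OF assms] unfolding turnP_def by auto
  then have "turnP u v (SOME t. turnP u v t)" by (rule someI_ex)
  then show "tF u v \<in> Faces" "faces_at v = {LF u v, RF u v, tF u v}" "LF u v \<noteq> RF u v" "tF u v \<noteq> LF u v" "tF u v \<noteq> RF u v"
     "u \<notin> face_verts (tF u v)" "\<And>w. (bw_adj v w \<and> w \<noteq> u) \<longleftrightarrow> (w = tL u v \<or> w = tR u v)" "tL u v \<noteq> tR u v"
     "LF v (tL u v) = LF u v" "RF v (tL u v) = tF u v" "LF v (tR u v) = tF u v" "RF v (tR u v) = RF u v"
    unfolding tL_def tR_def tF_def turnP_def by (auto split: prod.splits)
qed

lemma turn_adj:
  assumes "bw_adj u v"
  shows "bw_adj v (tL u v)" "bw_adj v (tR u v)" "tL u v \<noteq> u" "tR u v \<noteq> u"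
  using turn_props(7)[OF assms, of "tL u v"] turn_props(7)[OF assms, of "tR u v"] by auto

lemma LF_in: "bw_adj p q \<Longrightarrow> LF p q \<in> faces_at p \<and> LF p q \<in> faces_at q"
  using edge_faces[of p q "LF p q"] by (auto simp: faces_at_def)

lemma RF_in: "bw_adj p q \<Longrightarrow> RF p q \<in> faces_at p \<and> RF p q \<in> faces_at q"
  using edge_faces[of p q "RF p q"] by (auto simp: faces_at_def)

lemma step_unique:
  assumes "bw_adj u v" "c (LF u v)" "\<not> c (RF u v)"
  shows "(THE w. bw_adj v w \<and> w \<noteq> u \<and> c (left_face v w) \<and> \<not> c (right_face v w)) =
         (if c (tF u v) then tR u v else tL u v)"
proof (rule the_equality)
  have a: "bw_adj v (tL u v)" "bw_adj v (tR u v)" "tL u v \<noteq> u" "tR u v \<noteq> u" using turn_adj[OF assms(1)] by auto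
  show "bw_adj v (if c (tF u v) then tR u v else tL u v) \<and> (if c (tF u v) then tR u v else tL u v) \<noteq> u \<and>
    c (left_face v (if c (tF u v) then tR u v else tL u v)) \<and> \<not> c (right_face v (if c (tF u v) then tR u v else tL u v))"
    using a assms turn_props[OF assms(1)] by (auto simp: left_face_eq right_face_eq)
next
  fix w assume w: "bw_adj v w \<and> w \<noteq> u \<and> c (left_face v w) \<and> \<not> c (right_face v w)"
  then have "w = tL u v \<or> w = tR u v" using turn_props(7)[OF assms(1)] by blast
  then show "w = (if c (tF u v) then tR u v else tL u v)"
    using w assms turn_props[OF assms(1)] by (auto simp: left_face_eq right_face_eq)
qed

lemma first_unique:
  assumes "\<exists>f\<in>faces_at a. c f" "\<exists>f\<in>faces_at a. \<not> c f"
  shows "\<exists>!w. bw_adj a w \<and> c (left_face a w) \<and> \<not> c (right_face a w)"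
proof -
  define u where "u = (fst a + 1, snd a)"
  have ua: "bw_adj u a" using adj_iff[of "fst a" "snd a" u] adj_sym unfolding u_def by (metis prod.collapse)
  have au: "bw_adj a u" using ua adj_sym by blast
  note T = turn_props[OF ua]
  note A = turn_adj[OF ua]
  let ?L = "LF u a" and ?R = "RF u a" and ?F = "tF u a"
  have lu: "LF a u = ?R" "RF a u = ?L" using LF_swap[OF ua] RF_swap[OF ua] by auto
  have nb: "bw_adj a w \<longleftrightarrow> w = u \<or> w = tL u a \<or> w = tR u a" for w using T(7)[of w] au A by auto
  have col: "\<not> (c ?L \<and> c ?R \<and> c ?F)" "\<not> (\<not> c ?L \<and> \<not> c ?R \<and> \<not> c ?F)" using assms T(2) by auto
  define P where "P w = (bw_adj a w \<and> c (left_face a w) \<and> \<not> c (right_face a w))" for w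
  have Pu: "P u \<longleftrightarrow> c ?R \<and> \<not> c ?L" unfolding P_def using au lu by (simp add: left_face_eq right_face_eq)
  have PL: "P (tL u a) \<longleftrightarrow> c ?L \<and> \<not> c ?F" unfolding P_def using A T by (simp add: left_face_eq right_face_eq)
  have PR: "P (tR u a) \<longleftrightarrow> c ?F \<and> \<not> c ?R" unfolding P_def using A T by (simp add: left_face_eq right_face_eq)
  have Pw: "P w \<Longrightarrow> w = u \<or> w = tL u a \<or> w = tR u a" for w unfolding P_def using nb by blast
  have d: "u \<noteq> tL u a" "u \<noteq> tR u a" "tL u a \<noteq> tR u a" using A T by auto
  have "\<exists>!w. P w"
  proof (cases "c ?L")
    case True
    then show ?thesis
    proof (cases "c ?F")
      case True
      then have "\<not> c ?R" using col `c ?L` by blast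
      then have "P (tR u a)" "\<not> P u" "\<not> P (tL u a)" using Pu PL PR True `c ?L` by auto
      then show ?thesis using Pw d by metis
    next
      case False
      then have "P (tL u a)" "\<not> P (tR u a)" "\<not> P u" using Pu PL PR `c ?L` by auto
      then show ?thesis using Pw d by metis
    qed
  next
    case False
    then show ?thesis
    proof (cases "c ?R")
      case True
      then have "P u" "\<not> P (tR u a)" "\<not> P (tL u a)" using Pu PL PR `\<not> c ?L` by auto
      then show ?thesis using Pw d by metis
    next
      case False
      then have "c ?F" using col `\<not> c ?L` by blast
      then have "P (tR u a)" "\<not> P u" "\<not> P (tL u a)" using Pu PL PR `\<not> c ?L` False by auto
      then show ?thesis using Pw d by metis
    qed
  qed
  then show ?thesis unfolding P_def .
qed

lemma explore_inv:
  assumes "\<exists>f\<in>faces_at a. c f" "\<exists>f\<in>faces_at a. \<not> c f"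
  shows "bw_adj (explore c a n) (explore c a (Suc n)) \<and> c (LF (explore c a n) (explore c a (Suc n))) \<and>
         \<not> c (RF (explore c a n) (explore c a (Suc n)))"
proof (induction n)
  case 0
  define w where "w = explore c a (Suc 0)"
  have h: "bw_adj a w \<and> c (left_face a w) \<and> \<not> c (right_face a w)"
    using theI'[OF first_unique[OF assms]] by (simp add: w_def)
  then have "bw_adj a w" "c (LF a w)" "\<not> c (RF a w)" by (auto simp: left_face_eq right_face_eq)
  then show ?case unfolding w_def[symmetric] by simp
next
  case (Suc n)
  let ?u = "explore c a n" and ?v = "explore c a (Suc n)"
  have e: "explore c a (Suc (Suc n)) = (if c (tF ?u ?v) then tR ?u ?v else tL ?u ?v)"
    using step_unique[of ?u ?v c] Suc by (simp add: Let_def)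
  have a: "bw_adj ?u ?v" using Suc by simp
  show ?case unfolding e using turn_adj[OF a] turn_props[OF a] Suc by auto
qed

lemma explore_next:
  assumes "\<exists>f\<in>faces_at a. c f" "\<exists>f\<in>faces_at a. \<not> c f"
  shows "explore c a (Suc (Suc n)) = (let u = explore c a n; v = explore c a (Suc n) in
           if c (tF u v) then tR u v else tL u v)"
  using step_unique[of "explore c a n" "explore c a (Suc n)" c] explore_inv[OF assms, of n]
  by (simp add: Let_def)

lemma explore_local:
  assumes "\<forall>k<m. \<forall>f\<in>faces_at (explore c a k). c f = c' f"
  shows "k \<le> m \<Longrightarrow> explore c a k = explore c' a k"
proof (induction k rule: less_induct)
  case (less k)
  show ?case
  proof (cases k)
    case 0 then show ?thesis by simp
  next
    case (Suc k1)
    show ?thesis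
    proof (cases k1)
      case 0
      have m: "0 < m" using less.prems Suc 0 by simp
      have cf: "\<forall>f\<in>faces_at a. c f = c' f" using assms m by (metis explore.simps(1))
      have "(\<lambda>w. bw_adj a w \<and> c (left_face a w) \<and> \<not> c (right_face a w)) =
            (\<lambda>w. bw_adj a w \<and> c' (left_face a w) \<and> \<not> c' (right_face a w))"
      proof (rule ext)
        fix w show "(bw_adj a w \<and> c (left_face a w) \<and> \<not> c (right_face a w)) =
            (bw_adj a w \<and> c' (left_face a w) \<and> \<not> c' (right_face a w))"
        proof (cases "bw_adj a w")
          case True
          then have "c (left_face a w) = c' (left_face a w)" "c (right_face a w) = c' (right_face a w)"
            using cf LF_in[OF True] RF_in[OF True] by (simp_all add: left_face_eq right_face_eq)
          then show ?thesis by simp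
        qed simp
      qed
      then show ?thesis using Suc 0 by simp
    next
      case (Suc n)
      have k: "k = Suc (Suc n)" using `k = Suc k1` Suc by simp
      have ih: "explore c a n = explore c' a n" "explore c a (Suc n) = explore c' a (Suc n)"
        using less k by auto
      have m: "Suc n < m" using less.prems k by simp
      let ?u = "explore c a n" and ?v = "explore c a (Suc n)"
      have cf: "\<forall>f\<in>faces_at ?v. c f = c' f" using assms m by blast
      have "(\<lambda>w. bw_adj ?v w \<and> w \<noteq> ?u \<and> c (left_face ?v w) \<and> \<not> c (right_face ?v w)) =
            (\<lambda>w. bw_adj ?v w \<and> w \<noteq> ?u \<and> c' (left_face ?v w) \<and> \<not> c' (right_face ?v w))"
      proof (rule ext)
        fix w show "(bw_adj ?v w \<and> w \<noteq> ?u \<and> c (left_face ?v w) \<and> \<not> c (right_face ?v w)) =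
            (bw_adj ?v w \<and> w \<noteq> ?u \<and> c' (left_face ?v w) \<and> \<not> c' (right_face ?v w))"
        proof (cases "bw_adj ?v w")
          case True
          then have "c (left_face ?v w) = c' (left_face ?v w)" "c (right_face ?v w) = c' (right_face ?v w)"
            using cf LF_in[OF True] RF_in[OF True] by (simp_all add: left_face_eq right_face_eq)
          then show ?thesis by simp
        qed simp
      qed
      then show ?thesis using k ih by (simp add: Let_def)
    qed
  qed
qed


lemma propagate:
  assumes "\<forall>w\<in>set ps. \<forall>h1 h2. h1 \<in> faces_at w \<inter> G \<and> h2 \<in> faces_at w \<inter> G \<longrightarrow> pf h1 = pf h2"
    "\<forall>st\<in>set (steps ps). \<exists>h\<in>G. fst st \<in> face_verts h \<and> snd st \<in> face_verts h \<and> h \<in> Faces"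
    "ps \<noteq> []" "h1 \<in> faces_at (hd ps) \<inter> G" "h2 \<in> faces_at (last ps) \<inter> G"
  shows "pf h1 = pf h2"
  using assms
proof (induction ps arbitrary: h1 rule: steps.induct)
  case (1 x y zs)
  obtain h where h: "h \<in> G" "x \<in> face_verts h" "y \<in> face_verts h" "h \<in> Faces" using "1.prems"(2) by auto
  have hx: "h \<in> faces_at x \<inter> G" "h \<in> faces_at y \<inter> G" using h by (auto simp: faces_at_def)
  have cx: "\<forall>h1 h2. h1 \<in> faces_at x \<inter> G \<and> h2 \<in> faces_at x \<inter> G \<longrightarrow> pf h1 = pf h2"
    using "1.prems"(1) by (meson list.set_intros(1))
  have h1x: "h1 \<in> faces_at x \<inter> G" using "1.prems"(4) by simp
  have e1: "pf h1 = pf h" using cx[rule_format, of h1 h] h1x hx(1) by blast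
  have "pf h = pf h2"
    apply (rule "1.IH")
    using "1.prems" hx(2) by auto
  then show ?case using e1 by simp
next
  case ("2_1") then show ?case by simp
next
  case ("2_2" v)
  have cx: "\<forall>h1 h2. h1 \<in> faces_at v \<inter> G \<and> h2 \<in> faces_at v \<inter> G \<longrightarrow> pf h1 = pf h2"
    using "2_2.prems"(1) by simp
  show ?case using cx[rule_format, of h1 h2] "2_2.prems"(4,5) by simp
qed

lemma len_filter_ex2: "length (filter P xs) \<noteq> 0 \<Longrightarrow> \<exists>x\<in>set xs. P x"
  by (induction xs) (auto split: if_splits)

lemma consist:
  assumes "closed_walk W" "w \<notin> T" "Bad \<subseteq> Faces"
    "\<forall>st\<in>set (steps W). (fst st \<in> T \<and> snd st \<in> T) \<or> (\<exists>\<Phi>\<in>Bad. fst st \<in> face_verts \<Phi> \<and> snd st \<in> face_verts \<Phi>)"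
    "h1 \<in> faces_at w" "h2 \<in> faces_at w" "h1 \<notin> Bad" "h2 \<notin> Bad"
  shows "piW W h1 = piW W h2"
proof (cases "h1 = h2")
  case False
  obtain z where z: "bw_adj w z" "{h1,h2} = {LF w z, RF w z}" using two_faces_edge[OF assms(5,6) False] by blast
  have "cntE W w z = 0"
    unfolding cntE_def
  proof (rule ccontr)
    assume "length (filter (\<lambda>st. st = (w, z) \<or> st = (z, w)) (steps W)) \<noteq> 0"
    then obtain e where e: "e \<in> set (steps W)" "e = (w,z) \<or> e = (z,w)" using len_filter_ex2 by blast
    have "\<not> (fst e \<in> T \<and> snd e \<in> T)" using e(2) assms(2) by auto
    then obtain \<Phi> where P: "\<Phi> \<in> Bad" "w \<in> face_verts \<Phi>" "z \<in> face_verts \<Phi>" using assms(4) e by auto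
    have "\<Phi> = LF w z \<or> \<Phi> = RF w z" using edge_faces[OF z(1), of \<Phi>] P assms(3) by auto
    then have "\<Phi> \<in> {h1,h2}" using z(2) by auto
    then show False using P(1) assms(7,8) by auto
  qed
  then have "piW W (LF w z) = piW W (RF w z)" using edge_parity[OF assms(1) z(1)] by simp
  moreover have "(h1 = LF w z \<and> h2 = RF w z) \<or> (h1 = RF w z \<and> h2 = LF w z)" using z(2) by (metis doubleton_eq_iff)
  ultimately show ?thesis by auto
qed simp

lemma cntE_join: "xs \<noteq> [] \<Longrightarrow> ys \<noteq> [] \<Longrightarrow> last xs = hd ys \<Longrightarrow> cntE (xs @ tl ys) p q = cntE xs p q + cntE ys p q"
  unfolding cntE_def by (simp add: steps_join)

lemma cntE_last: "distinct (ys @ [u,v]) \<Longrightarrow> cntE (ys @ [u,v]) u v = 1"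
proof -
  assume d: "distinct (ys @ [u,v])"
  have s: "steps (ys @ [u,v]) = steps (ys @ [u]) @ [(u,v)]"
    using steps_append[of "ys @ [u]" "[v]"] by simp
  have nv: "v \<notin> set (ys @ [u])" using d by auto
  have "\<forall>st\<in>set (steps (ys @ [u])). \<not> (st = (u,v) \<or> st = (v,u))"
  proof
    fix st assume h: "st \<in> set (steps (ys @ [u]))"
    have m: "fst st \<in> set (ys @ [u])" "snd st \<in> set (ys @ [u])" using steps_mem[OF h] by auto
    show "\<not> (st = (u,v) \<or> st = (v,u))"
    proof
      assume "st = (u,v) \<or> st = (v,u)"
      then have "v = fst st \<or> v = snd st" by auto
      then show False using m nv by blast
    qed
  qed
  then have "filter (\<lambda>st. st = (u,v) \<or> st = (v,u)) (steps (ys @ [u])) = []"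
    by (simp only: filter_empty_conv)
  then show ?thesis unfolding cntE_def s by simp
qed

lemma cntE_zero: "(\<forall>st\<in>set (steps W). \<not> (st = (p,q) \<or> st = (q,p))) \<Longrightarrow> cntE W p q = 0"
  unfolding cntE_def by (simp add: filter_empty_conv)

lemma last_join: "xs \<noteq> [] \<Longrightarrow> ys \<noteq> [] \<Longrightarrow> last xs = hd ys \<Longrightarrow> last (xs @ tl ys) = last ys"
  by (cases ys; cases "tl ys") (auto simp: last_tl)

lemma lattice_path_drop: "lattice_path_in D xs \<Longrightarrow> k < length xs \<Longrightarrow> lattice_path_in D (drop k xs)"
  unfolding lattice_path_in_def by auto

lemma lp_step_faces:
  assumes "lattice_path_in D ps" "D \<subseteq> Faces" "\<Phi> \<in> D"
  shows "\<forall>st\<in>set (steps ps). \<exists>h\<in>Faces - {\<Phi>}. fst st \<in> face_verts h \<and> snd st \<in> face_verts h \<and> h \<in> Faces"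
proof
  fix st assume st: "st \<in> set (steps ps)"
  have e: "D_edge D (fst st) (snd st)" using lattice_path_steps[OF assms(1) st] .
  then have a: "bw_adj (fst st) (snd st)" by (simp add: D_edge_def)
  have l: "LF (fst st) (snd st) \<in> Faces" "fst st \<in> face_verts (LF (fst st) (snd st))" "snd st \<in> face_verts (LF (fst st) (snd st))"
    "RF (fst st) (snd st) \<in> Faces" "fst st \<in> face_verts (RF (fst st) (snd st))" "snd st \<in> face_verts (RF (fst st) (snd st))"
    using edge_faces[OF a, of "LF (fst st) (snd st)"] edge_faces[OF a, of "RF (fst st) (snd st)"] by auto
  show "\<exists>h\<in>Faces - {\<Phi>}. fst st \<in> face_verts h \<and> snd st \<in> face_verts h \<and> h \<in> Faces"
  proof (cases "LF (fst st) (snd st) = \<Phi>")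
    case True
    then have "RF (fst st) (snd st) \<noteq> \<Phi>" using LF_neq_RF[OF a] by auto
    then show ?thesis using l by blast
  next
    case False
    then show ?thesis using l by blast
  qed
qed

lemma lp_step_D:
  assumes "lattice_path_in D ps" "D \<subseteq> Faces"
  shows "\<forall>st\<in>set (steps ps). \<exists>h\<in>D. fst st \<in> face_verts h \<and> snd st \<in> face_verts h \<and> h \<in> Faces"
proof
  fix st assume "st \<in> set (steps ps)"
  then have "D_edge D (fst st) (snd st)" using lattice_path_steps[OF assms(1)] by blast
  then obtain f where "f \<in> D" "fst st \<in> face_verts f" "snd st \<in> face_verts f" unfolding D_edge_def by blast
  then show "\<exists>h\<in>D. fst st \<in> face_verts h \<and> snd st \<in> face_verts h \<and> h \<in> Faces" using assms(2) by blast
qed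

lemma sep_one:
  assumes dom: "D \<subseteq> Faces" "finite D" "face_connected (Faces - D)"
    and W: "closed_walk W" "\<forall>st\<in>set (steps W). \<exists>h\<in>D. fst st \<in> face_verts h \<and> snd st \<in> face_verts h"
    "\<forall>st\<in>set (steps W). (fst st \<in> T \<and> snd st \<in> T) \<or> (fst st \<in> face_verts \<Phi> \<and> snd st \<in> face_verts \<Phi>)"
    and P: "\<Phi> \<in> D"
    and ps: "ps \<noteq> []" "lattice_path_in D ps" "set ps \<inter> T = {}" "hb \<in> faces_at (last ps)" "hb \<notin> D"
    and h1: "h1 \<in> faces_at (hd ps)" "h1 \<noteq> \<Phi>"
  shows "\<not> piW W h1"
proof -
  have PF: "\<Phi> \<in> Faces" using P dom by auto
  have c: "\<forall>w\<in>set ps. \<forall>h1 h2. h1 \<in> faces_at w \<inter> (Faces - {\<Phi>}) \<and> h2 \<in> faces_at w \<inter> (Faces - {\<Phi>}) \<longrightarrow> piW W h1 = piW W h2"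
  proof (intro ballI allI impI)
    fix w h1 h2 assume w: "w \<in> set ps" and hh: "h1 \<in> faces_at w \<inter> (Faces - {\<Phi>}) \<and> h2 \<in> faces_at w \<inter> (Faces - {\<Phi>})"
    have wT: "w \<notin> T" using w ps(3) by auto
    show "piW W h1 = piW W h2"
      apply (rule consist[OF W(1) wT, of "{\<Phi>}"])
      using PF W(3) hh by auto
  qed
  have hbF: "hb \<in> faces_at (last ps) \<inter> (Faces - {\<Phi>})" using ps(4,5) P by (auto simp: faces_at_def)
  have h1F: "h1 \<in> faces_at (hd ps) \<inter> (Faces - {\<Phi>})" using h1 by (auto simp: faces_at_def)
  have "piW W h1 = piW W hb"
    by (rule propagate[OF c lp_step_faces[OF ps(2) dom(1) P] ps(1) h1F hbF])
  moreover have "\<not> piW W hb"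
    by (rule compl_zero[OF W(1,2) dom]) (use ps(4,5) in \<open>auto simp: faces_at_def\<close>)
  ultimately show ?thesis by simp
qed


lemma steps_drop_sub: "set (steps (drop k xs)) \<subseteq> set (steps xs)"
  unfolding steps_nth by auto

lemma lp_adj_last: "lattice_path_in D (ys @ [u,v]) \<Longrightarrow> bw_adj u v"
proof -
  assume l: "lattice_path_in D (ys @ [u,v])"
  have "D_edge D ((ys @ [u,v]) ! length ys) ((ys @ [u,v]) ! Suc (length ys))"
  proof -
    have i: "Suc (length ys) < length (ys @ [u,v])" by simp
    show ?thesis using l i unfolding lattice_path_in_def by blast
  qed
  moreover have "(ys @ [u,v]) ! length ys = u" "(ys @ [u,v]) ! Suc (length ys) = v" by (simp_all add: nth_append)
  ultimately have "D_edge D u v" by simp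
  then show ?thesis by (simp add: D_edge_def)
qed

lemma sepA:
  assumes dom: "D \<subseteq> Faces" "finite D" "face_connected (Faces - D)"
    and hb: "hb \<in> faces_at b" "hb \<notin> D"
    and g: "distinct (ys @ [u,V])" "lattice_path_in D (ys @ [u,V])"
    and FD: "tF u V \<in> D"
    and c1: "ps1 \<noteq> []" "hd ps1 = tL u V" "last ps1 = b" "lattice_path_in D ps1" "set ps1 \<inter> set (ys @ [u,V]) = {}"
    and c2: "ps2 \<noteq> []" "hd ps2 = tR u V" "last ps2 = b" "lattice_path_in D ps2" "set ps2 \<inter> set (ys @ [u,V]) = {}"
  shows "\<forall>x\<in>set (ys @ [u]). x \<notin> face_verts (tF u V)"
proof (rule ccontr)
  let ?g = "ys @ [u,V]"
  let ?F = "tF u V"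
  assume "\<not> ?thesis"
  then obtain x where x: "x \<in> set (ys @ [u])" "x \<in> face_verts ?F" by blast
  have uV: "bw_adj u V" using lp_adj_last[OF g(2)] .
  note T = turn_props[OF uV]
  note TA = turn_adj[OF uV]
  obtain k where k: "k < length (ys @ [u])" "(ys @ [u]) ! k = x" using x(1) by (metis in_set_conv_nth)
  define A where "A = drop k ?g"
  have Aeq: "A = drop k ys @ [u,V]" unfolding A_def using k(1) by simp
  have kg: "k < length ?g" using k(1) by simp
  have A1: "A \<noteq> []" "last A = V" unfolding A_def using kg by auto
  have h1: "hd (drop k ?g) = ?g ! k" by (rule hd_drop_conv_nth) (use kg in simp)
  have h2: "?g ! k = (ys @ [u]) ! k"
    using k(1) nth_append[of "ys @ [u]" "[V]" k] by simp
  have A2: "hd A = x" unfolding A_def using h1 h2 k(2) by simp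
  have A3: "walk_adj A" "set A \<subseteq> set ?g" "set (steps A) \<subseteq> set (steps ?g)" "distinct A"
    unfolding A_def using walk_adj_drop[OF lattice_path_walk[OF g(2)], of k] set_drop_subset[of k ?g] steps_drop_sub[of k ?g]
      distinct_drop[OF g(1)] by auto
  note A = A1(1) A2 A1(2) A3
  obtain arc where arc: "arc \<noteq> []" "hd arc = V" "last arc = x" "walk_adj arc" "set arc \<subseteq> face_verts ?F"
    using face_walk[OF T(1) _ x(2), of V] T(2) by (auto simp: faces_at_def)
  define W where "W = A @ tl arc"
  have sW: "set (steps W) = set (steps A) \<union> set (steps arc)"
    unfolding W_def using steps_join[OF A(1) arc(1)] A(3) arc(2) by simp
  have cW: "closed_walk W"
    unfolding closed_walk_def W_def using A arc walk_adj_join[OF A(1) arc(1)] last_join[OF A(1) arc(1)] by simp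
  have Dsup: "\<forall>st\<in>set (steps W). \<exists>h\<in>D. fst st \<in> face_verts h \<and> snd st \<in> face_verts h"
  proof
    fix st assume st: "st \<in> set (steps W)"
    show "\<exists>h\<in>D. fst st \<in> face_verts h \<and> snd st \<in> face_verts h"
    proof (cases "st \<in> set (steps A)")
      case True
      then have "D_edge D (fst st) (snd st)" using lattice_path_steps[OF g(2)] A(6) by blast
      then show ?thesis unfolding D_edge_def by blast
    next
      case False
      then have "st \<in> set (steps arc)" using st sW by auto
      then have "fst st \<in> face_verts ?F \<and> snd st \<in> face_verts ?F" using steps_mem arc(5) by blast
      then show ?thesis using FD by blast
    qed
  qed
  have Tc: "\<forall>st\<in>set (steps W). (fst st \<in> set ?g \<and> snd st \<in> set ?g) \<or> (fst st \<in> face_verts ?F \<and> snd st \<in> face_verts ?F)"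
  proof
    fix st assume st: "st \<in> set (steps W)"
    show "(fst st \<in> set ?g \<and> snd st \<in> set ?g) \<or> (fst st \<in> face_verts ?F \<and> snd st \<in> face_verts ?F)"
    proof (cases "st \<in> set (steps A)")
      case True
      then show ?thesis using steps_mem A(5) by blast
    next
      case False
      then have "st \<in> set (steps arc)" using st sW by auto
      then show ?thesis using steps_mem arc(5) by blast
    qed
  qed
  have c0: "cntE arc u V = 0"
  proof (rule cntE_zero, rule ballI)
    fix st assume st: "st \<in> set (steps arc)"
    have "fst st \<in> face_verts ?F" "snd st \<in> face_verts ?F" using steps_mem[OF st] arc(5) by auto
    then show "\<not> (st = (u,V) \<or> st = (V,u))" using T(6) by auto
  qed
  have c1': "cntE A u V = 1" unfolding Aeq by (rule cntE_last) (use A(7) Aeq in simp)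
  have "cntE W u V = 1" unfolding W_def using cntE_join[OF A(1) arc(1)] A(3) arc(2) c0 c1' by simp
  then have diff: "piW W (LF u V) \<noteq> piW W (RF u V)" using edge_parity[OF cW uV] by simp
  have n1: "\<not> piW W (LF u V)"
  proof (rule sep_one[OF dom cW Dsup Tc FD c1(1,4) c1(5) _ hb(2)])
    show "hb \<in> faces_at (last ps1)" using c1(3) hb(1) by simp
    show "LF u V \<in> faces_at (hd ps1)" using c1(2) LF_in[OF TA(1)] T(9) by simp
    show "LF u V \<noteq> tF u V" using T(4) by simp
  qed
  have n2: "\<not> piW W (RF u V)"
  proof (rule sep_one[OF dom cW Dsup Tc FD c2(1,4) c2(5) _ hb(2)])
    show "hb \<in> faces_at (last ps2)" using c2(3) hb(1) by simp
    show "RF u V \<in> faces_at (hd ps2)" using c2(2) RF_in[OF TA(2)] T(12) by simp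
    show "RF u V \<noteq> tF u V" using T(5) by simp
  qed
  show False using diff n1 n2 by simp
qed

lemma sepB1:
  assumes dom: "D \<subseteq> Faces" "face_connected (Faces - D)"
    and ha: "ha \<in> faces_at a" "ha \<notin> D"
    and g: "distinct (ys @ [V,V'])" "lattice_path_in D (ys @ [V,V'])" "hd (ys @ [V]) = a"
    and intV: "faces_at V \<subseteq> D"
    and hb: "hb \<in> faces_at b" "hb \<in> D"
    and c1: "ps1 \<noteq> []" "hd ps1 = tL V V'" "last ps1 = b" "lattice_path_in D ps1" "set ps1 \<inter> set (ys @ [V,V']) = {}"
    and c2: "ps2 \<noteq> []" "hd ps2 = tR V V'" "last ps2 = b" "lattice_path_in D ps2" "set ps2 \<inter> set (ys @ [V,V']) = {}"
  shows "tF V V' \<in> D"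
proof (rule ccontr)
  let ?g = "ys @ [V,V']"
  let ?G = "tF V V'"
  assume nG: "?G \<notin> D"
  have VV: "bw_adj V V'" using lp_adj_last[OF g(2)] .
  note T = turn_props[OF VV]
  note TA = turn_adj[OF VV]
  have GV': "?G \<in> faces_at V'" using T(2) by auto
  have conn: "(?G, ha) \<in> (Restr {(h,k). face_adj h k} (Faces - D))\<^sup>*"
    using dom(2) T(1) nG ha unfolding face_connected_def by (auto simp: faces_at_def)
  obtain cw where cw: "cw \<noteq> []" "hd cw = V'" "last cw = a" "walk_adj cw"
    "\<forall>st\<in>set (steps cw). \<exists>g'\<in>Faces - D. fst st \<in> face_verts g' \<and> snd st \<in> face_verts g'"
    using chain_walk[OF conn _ _ , of V'] GV' T(1) nG ha(1) by (auto simp: faces_at_def)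
  define W where "W = ?g @ tl cw"
  have g1: "?g \<noteq> []" "last ?g = hd cw" "walk_adj ?g" using cw(2) lattice_path_walk[OF g(2)] by auto
  have sW: "set (steps W) = set (steps ?g) \<union> set (steps cw)"
    unfolding W_def using steps_join[OF g1(1) cw(1) g1(2)] by simp
  have hg: "hd ?g = a" using g(3) by (cases ys) auto
  have hW: "hd W = a" unfolding W_def using hg g1(1) hd_append2 by metis
  have cW: "closed_walk W"
    unfolding closed_walk_def using hW unfolding W_def using cw walk_adj_join[OF g1(1) cw(1) g1(2) g1(3) cw(4)] last_join[OF g1(1) cw(1) g1(2)] by simp
  have Tc: "\<forall>st\<in>set (steps W). (fst st \<in> set ?g \<and> snd st \<in> set ?g) \<or> (\<exists>\<Phi>\<in>Faces - D. fst st \<in> face_verts \<Phi> \<and> snd st \<in> face_verts \<Phi>)"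
  proof
    fix st assume st: "st \<in> set (steps W)"
    show "(fst st \<in> set ?g \<and> snd st \<in> set ?g) \<or> (\<exists>\<Phi>\<in>Faces - D. fst st \<in> face_verts \<Phi> \<and> snd st \<in> face_verts \<Phi>)"
    proof (cases "st \<in> set (steps ?g)")
      case True
      then show ?thesis using steps_mem by blast
    next
      case False
      then have "st \<in> set (steps cw)" using st sW by auto
      then show ?thesis using cw(5) by blast
    qed
  qed
  have LRD: "LF V V' \<in> D" "RF V V' \<in> D" using LF_in[OF VV] RF_in[OF VV] intV by auto
  have c0: "cntE cw V V' = 0"
  proof (rule cntE_zero, rule ballI)
    fix st assume st: "st \<in> set (steps cw)"
    obtain g' where g': "g' \<in> Faces - D" "fst st \<in> face_verts g'" "snd st \<in> face_verts g'" using cw(5) st by blast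
    show "\<not> (st = (V,V') \<or> st = (V',V))"
    proof
      assume e: "st = (V,V') \<or> st = (V',V)"
      then have "V \<in> face_verts g'" "V' \<in> face_verts g'" using g' by auto
      then have "g' = LF V V' \<or> g' = RF V V'" using edge_faces[OF VV, of g'] g'(1) by auto
      then show False using g'(1) LRD by auto
    qed
  qed
  have c1': "cntE ?g V V' = 1" by (rule cntE_last) (use g(1) in simp)
  have "cntE W V V' = 1" unfolding W_def using cntE_join[OF g1(1) cw(1) g1(2)] c0 c1' by simp
  then have diff: "piW W (LF V V') \<noteq> piW W (RF V V')" using edge_parity[OF cW VV] by simp
  have BF: "Faces - D \<subseteq> Faces" by auto
  have cons: "\<forall>w\<in>set ps. \<forall>h1 h2. h1 \<in> faces_at w \<inter> D \<and> h2 \<in> faces_at w \<inter> D \<longrightarrow> piW W h1 = piW W h2"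
    if "set ps \<inter> set ?g = {}" for ps
  proof (intro ballI allI impI)
    fix w h1 h2 assume w: "w \<in> set ps" and hh: "h1 \<in> faces_at w \<inter> D \<and> h2 \<in> faces_at w \<inter> D"
    have wT: "w \<notin> set ?g" using w that by auto
    show "piW W h1 = piW W h2"
      by (rule consist[OF cW wT BF Tc]) (use hh in auto)
  qed
  have hbD: "hb \<in> faces_at (last ps1) \<inter> D" "hb \<in> faces_at (last ps2) \<inter> D" using hb c1(3) c2(3) by auto
  have e1: "piW W (LF V V') = piW W hb"
  proof (rule propagate[OF cons[OF c1(5)] lp_step_D[OF c1(4) dom(1)] c1(1) _ hbD(1)])
    show "LF V V' \<in> faces_at (hd ps1) \<inter> D" using c1(2) LF_in[OF TA(1)] T(9) LRD by simp
  qed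
  have e2: "piW W (RF V V') = piW W hb"
  proof (rule propagate[OF cons[OF c2(5)] lp_step_D[OF c2(4) dom(1)] c2(1) _ hbD(2)])
    show "RF V V' \<in> faces_at (hd ps2) \<inter> D" using c2(2) RF_in[OF TA(2)] T(12) LRD by simp
  qed
  show False using diff e1 e2 by simp
qed


lemma ident_PV:
  assumes "bw_adj u V" "\<not> bw_short u V"
  shows "Vprime V \<in> {tL u V, tR u V}" "P_of u V \<in> {tL u V, tR u V}" "P_of u V \<noteq> Vprime V"
proof -
  note T = turn_props[OF assms(1)]
  note TA = turn_adj[OF assms(1)]
  have vp: "Vprime V = Vp V" by (rule Vprime_eq)
  have ne: "Vp V \<noteq> u"
  proof
    assume "Vp V = u"
    then have "bw_short V u" using Vp_short[of V] by simp
    then show False using assms(2) short_sym by blast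
  qed
  have vin: "Vp V = tL u V \<or> Vp V = tR u V" using T(7)[of "Vp V"] Vp_adj[of V] ne by blast
  then show "Vprime V \<in> {tL u V, tR u V}" using vp by simp
  define Oth where "Oth = (if Vp V = tL u V then tR u V else tL u V)"
  have O: "bw_adj V Oth" "Oth \<noteq> u" "Oth \<noteq> Vp V" "Oth \<in> {tL u V, tR u V}"
    unfolding Oth_def using TA T(8) vin by auto
  have "P_of u V = Oth"
    unfolding P_of_def vp
  proof (rule the_equality)
    show "bw_adj V Oth \<and> Oth \<noteq> u \<and> Oth \<noteq> Vp V" using O by simp
  next
    fix w assume w: "bw_adj V w \<and> w \<noteq> u \<and> w \<noteq> Vp V"
    then have "w = tL u V \<or> w = tR u V" using T(7)[of w] by blast
    then show "w = Oth" using w vin unfolding Oth_def by auto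
  qed
  then show "P_of u V \<in> {tL u V, tR u V}" "P_of u V \<noteq> Vprime V" using O vp by auto
qed

lemma ident_QR:
  assumes "bw_adj V (Vp V)"
  shows "{Q_of u V, R_of u V} = {tL V (Vp V), tR V (Vp V)}" "Q_of u V \<noteq> R_of u V"
proof -
  let ?V' = "Vp V"
  note T = turn_props[OF assms(1)]
  note TA = turn_adj[OF assms(1)]
  have vp: "Vprime V = ?V'" by (rule Vprime_eq)
  obtain wv where wv: "bw_adj ?V' wv" "fst wv = fst ?V'" and wvu: "\<And>w. bw_adj ?V' w \<Longrightarrow> fst w = fst ?V' \<Longrightarrow> w = wv"
    using vert_nbr[of ?V'] by metis
  have "wv \<noteq> V" using wv(2) Vp_horiz[of V] by auto
  then have wvN: "wv = tL V ?V' \<or> wv = tR V ?V'" using T(7)[of wv] wv(1) by blast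
  define wh where "wh = (if wv = tL V ?V' then tR V ?V' else tL V ?V')"
  have wh: "bw_adj ?V' wh" "wh \<noteq> V" "wh \<noteq> wv" unfolding wh_def using TA T(8) wvN by auto
  have whh: "fst wh \<noteq> fst ?V'" using wvu[OF wh(1)] wh(3) by auto
  have wvV: "wv \<noteq> V" using `wv \<noteq> V` .
  have set2: "{wv, wh} = {tL V ?V', tR V ?V'}" unfolding wh_def using wvN T(8) by auto
  have N: "\<And>w. bw_adj ?V' w \<and> w \<noteq> V \<Longrightarrow> w = wv \<or> w = wh"
    using T(7) set2 by blast
  define \<beta> where "\<beta> = edge_vertical u V"
  have R: "R_of u V = (if \<beta> then wv else wh)"
    unfolding R_of_def vp \<beta>_def[symmetric]
  proof (rule the_equality)
    show "bw_adj ?V' (if \<beta> then wv else wh) \<and> (if \<beta> then wv else wh) \<noteq> V \<and>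
      (edge_vertical ?V' (if \<beta> then wv else wh) = \<beta>)"
      using wv wh wvV whh by (auto simp: edge_vertical_def)
  next
    fix w assume w: "bw_adj ?V' w \<and> w \<noteq> V \<and> (edge_vertical ?V' w = \<beta>)"
    then have "w = wv \<or> w = wh" using N by blast
    then show "w = (if \<beta> then wv else wh)" using w wv whh by (auto simp: edge_vertical_def)
  qed
  have Q: "Q_of u V = (if \<beta> then wh else wv)"
    unfolding Q_of_def vp \<beta>_def[symmetric]
  proof (rule the_equality)
    show "bw_adj ?V' (if \<beta> then wh else wv) \<and> (if \<beta> then wh else wv) \<noteq> V \<and>
      (edge_vertical ?V' (if \<beta> then wh else wv) = (\<not> \<beta>))"
      using wv wh wvV whh by (auto simp: edge_vertical_def)
  next
    fix w assume w: "bw_adj ?V' w \<and> w \<noteq> V \<and> (edge_vertical ?V' w = (\<not> \<beta>))"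
    then have "w = wv \<or> w = wh" using N by blast
    then show "w = (if \<beta> then wh else wv)" using w wv whh by (auto simp: edge_vertical_def)
  qed
  show "{Q_of u V, R_of u V} = {tL V ?V', tR V ?V'}" using Q R set2 by (auto simp: insert_commute)
  show "Q_of u V \<noteq> R_of u V" using Q R wh(3) by auto
qed


lemma lp_take: "lattice_path_in D xs \<Longrightarrow> 0 < k \<Longrightarrow> lattice_path_in D (take k xs)"
  unfolding lattice_path_in_def by auto

lemma cont1:
  assumes "simple_path_from_to D a b (g @ cs @ rest)" "cs \<noteq> []"
  shows "cs @ rest \<noteq> []" "hd (cs @ rest) = hd cs" "last (cs @ rest) = b" "lattice_path_in D (cs @ rest)"
    "set (cs @ rest) \<inter> set g = {}"
proof -
  have s: "lattice_path_in D (g @ cs @ rest)" "distinct (g @ cs @ rest)" "last (g @ cs @ rest) = b"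
    using assms(1) unfolding simple_path_from_to_def by auto
  show "cs @ rest \<noteq> []" "hd (cs @ rest) = hd cs" using assms(2) by auto
  show "last (cs @ rest) = b" using s(3) assms(2) by simp
  have "drop (length g) (g @ cs @ rest) = cs @ rest" by simp
  moreover have "length g < length (g @ cs @ rest)" using assms(2) by simp
  ultimately show "lattice_path_in D (cs @ rest)" using lattice_path_drop[OF s(1)] by metis
  show "set (cs @ rest) \<inter> set g = {}" using s(2) by auto
qed

lemma cont2:
  assumes "simple_path_from_to D a b (g @ [x,y] @ rest)"
  shows "y # rest \<noteq> []" "hd (y # rest) = y" "last (y # rest) = b" "lattice_path_in D (y # rest)"
    "set (y # rest) \<inter> set (g @ [x]) = {}" "distinct (g @ [x])" "lattice_path_in D (g @ [x])"
proof -
  have s: "lattice_path_in D (g @ [x,y] @ rest)" "distinct (g @ [x,y] @ rest)" "last (g @ [x,y] @ rest) = b"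
    using assms(1) unfolding simple_path_from_to_def by auto
  show "y # rest \<noteq> []" "hd (y # rest) = y" by auto
  show "last (y # rest) = b" using s(3) by (simp add: last_append)
  have "drop (Suc (length g)) (g @ [x,y] @ rest) = y # rest" by simp
  moreover have "Suc (length g) < length (g @ [x,y] @ rest)" by simp
  ultimately show "lattice_path_in D (y # rest)" using lattice_path_drop[OF s(1)] by metis
  show "set (y # rest) \<inter> set (g @ [x]) = {}" "distinct (g @ [x])" using s(2) by auto
  have "take (Suc (length g)) (g @ [x,y] @ rest) = g @ [x]" by simp
  then show "lattice_path_in D (g @ [x])" using lp_take[OF s(1), of "Suc (length g)"] by simp
qed

lemma upt_last2: "map X [0..<Suc (Suc i)] = map X [0..<i] @ [X i, X (Suc i)]"
  by simp

lemma ub_facts: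
  assumes dom: "lattice_domain D" and bcnd: "boundary_condition D bc a b" and ub: "unblocked_at D a b c j"
  shows "1 \<le> j" "bw_adj (explore c a (j-1)) (explore c a j)"
    "\<not> bw_short (explore c a (j-1)) (explore c a j)"
    "faces_at (explore c a j) \<subseteq> D"
    "\<forall>k<j. tF (explore c a (j-1)) (explore c a j) \<notin> faces_at (explore c a k)"
    "tF (explore c a j) (Vp (explore c a j)) \<in> D"
    "\<forall>k\<le>j. tF (explore c a j) (Vp (explore c a j)) \<notin> faces_at (explore c a k)"
proof -
  let ?X = "explore c a"
  have L: "leaves_unblocked D a b (map ?X [0..<Suc j])" using ub by (simp add: unblocked_at_def)
  then have "length (map ?X [0..<Suc j]) \<ge> 2" by (simp add: leaves_unblocked_def)
  then obtain i where j: "j = Suc i" by (cases j) auto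
  then show "1 \<le> j" by simp
  define ys where "ys = map ?X [0..<i]"
  define u where "u = ?X i"
  define V where "V = ?X (Suc i)"
  define g where "g = ys @ [u,V]"
  have gdef: "map ?X [0..<Suc j] = g" unfolding g_def ys_def u_def V_def j by simp
  have lastg: "last g = V" "last (butlast g) = u" unfolding g_def by (simp_all add: butlast_append)
  have Lg: "2 \<le> length g" "hd g = a" "distinct g" "lattice_path_in D g"
     "interior_vertex D V" "\<not> bw_short u V"
     "\<forall>cont \<in> {[P_of u V], [Vprime V, Q_of u V], [Vprime V, R_of u V]}.
          \<exists>rest. simple_path_from_to D a b (g @ cont @ rest)"
    using L unfolding gdef leaves_unblocked_def lastg Let_def by auto
  have ju: "?X (j-1) = u" "?X j = V" unfolding u_def V_def j by simp_all
  have uV: "bw_adj u V" using lp_adj_last[OF Lg(4)[unfolded g_def]] .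
  then show "bw_adj (?X (j-1)) (?X j)" using ju by simp
  show "\<not> bw_short (?X (j-1)) (?X j)" using Lg(6) ju by simp
  have intV: "faces_at V \<subseteq> D" using Lg(5) by (simp add: interior_vertex_def)
  then show "faces_at (?X j) \<subseteq> D" using ju by simp
  have domD: "D \<subseteq> Faces" "finite D" "face_connected (Faces - D)" using dom by (auto simp: lattice_domain_def)
  have bf: "bdry_faces D \<subseteq> Faces - D" by (auto simp: bdry_faces_def)
  obtain ha where ha: "ha \<in> faces_at a" "ha \<notin> D" using bcnd bf unfolding boundary_condition_def by blast
  obtain hb where hb: "hb \<in> faces_at b" "hb \<notin> D" using bcnd bf unfolding boundary_condition_def by blast
  obtain hbD where hbD: "hbD \<in> faces_at b" "hbD \<in> D" using bcnd unfolding boundary_condition_def by blast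
  obtain rP where rP: "simple_path_from_to D a b (g @ [P_of u V] @ rP)" using Lg(7) by auto
  obtain rQ where rQ: "simple_path_from_to D a b (g @ [Vprime V, Q_of u V] @ rQ)" using Lg(7) by auto
  obtain rR where rR: "simple_path_from_to D a b (g @ [Vprime V, R_of u V] @ rR)" using Lg(7) by auto
  note T = turn_props[OF uV]
  have FD: "tF u V \<in> D" using T(2) intV by auto
  note I1 = ident_PV[OF uV Lg(6)]
  note cP = cont1[OF rP, simplified]
  note cV = cont1[OF rQ, simplified]
  have A: "\<forall>x\<in>set (ys @ [u]). x \<notin> face_verts (tF u V)"
  proof (cases "P_of u V = tL u V")
    case True
    then have "Vprime V = tR u V" using I1 by auto
    show ?thesis
      apply (rule sepA[OF domD hb Lg(3)[unfolded g_def] Lg(4)[unfolded g_def] FD, of "P_of u V # rP" "Vprime V # Q_of u V # rQ"])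
      using cP cV True `Vprime V = tR u V` unfolding g_def by auto
  next
    case False
    then have "P_of u V = tR u V" "Vprime V = tL u V" using I1 by auto
    show ?thesis
      apply (rule sepA[OF domD hb Lg(3)[unfolded g_def] Lg(4)[unfolded g_def] FD, of "Vprime V # Q_of u V # rQ" "P_of u V # rP"])
      using cP cV `P_of u V = tR u V` `Vprime V = tL u V` unfolding g_def by auto
  qed
  show "\<forall>k<j. tF (?X (j-1)) (?X j) \<notin> faces_at (?X k)"
  proof (intro allI impI)
    fix k assume "k < j"
    then have "?X k \<in> set (ys @ [u])" unfolding ys_def u_def j by (cases "k = i") auto
    then show "tF (?X (j-1)) (?X j) \<notin> faces_at (?X k)" using A ju by (auto simp: faces_at_def)
  qed
  have vp: "Vprime V = Vp V" by (rule Vprime_eq)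
  have VV: "bw_adj V (Vp V)" by (rule Vp_adj)
  note I2 = ident_QR[OF VV, of u]
  note cQ = cont2[OF rQ[unfolded vp]]
  note cR = cont2[OF rR[unfolded vp]]
  have g2: "g = (ys @ [u]) @ [V]" unfolding g_def by simp
  have GD: "tF V (Vp V) \<in> D"
  proof (cases "Q_of u V = tL V (Vp V)")
    case True
    then have R: "R_of u V = tR V (Vp V)" using I2 by (auto simp: doubleton_eq_iff)
    show ?thesis
      apply (rule sepB1[OF domD(1,3) ha, of "ys @ [u]" V "Vp V" hbD b "Q_of u V # rQ" "R_of u V # rR"])
      using cQ cR True R Lg(2) hbD intV unfolding g2 by auto
  next
    case False
    then have R: "R_of u V = tL V (Vp V)" "Q_of u V = tR V (Vp V)" using I2 by (auto simp: doubleton_eq_iff)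
    show ?thesis
      apply (rule sepB1[OF domD(1,3) ha, of "ys @ [u]" V "Vp V" hbD b "R_of u V # rR" "Q_of u V # rQ"])
      using cQ cR R Lg(2) hbD intV unfolding g2 by auto
  qed
  then show "tF (?X j) (Vp (?X j)) \<in> D" using ju by simp
  have B: "\<forall>x\<in>set ((ys @ [u]) @ [V]). x \<notin> face_verts (tF V (Vp V))"
  proof (cases "Q_of u V = tL V (Vp V)")
    case True
    then have R: "R_of u V = tR V (Vp V)" using I2 by (auto simp: doubleton_eq_iff)
    show ?thesis
      apply (rule sepA[OF domD hb, of "ys @ [u]" V "Vp V" "Q_of u V # rQ" "R_of u V # rR"])
      using cQ cR True R GD unfolding g2 by auto
  next
    case False
    then have R: "R_of u V = tL V (Vp V)" "Q_of u V = tR V (Vp V)" using I2 by (auto simp: doubleton_eq_iff)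
    show ?thesis
      apply (rule sepA[OF domD hb, of "ys @ [u]" V "Vp V" "R_of u V # rR" "Q_of u V # rQ"])
      using cQ cR R GD unfolding g2 by auto
  qed
  show "\<forall>k\<le>j. tF (?X j) (Vp (?X j)) \<notin> faces_at (?X k)"
  proof (intro allI impI)
    fix k assume "k \<le> j"
    then have "?X k \<in> set ((ys @ [u]) @ [V])" unfolding ys_def u_def V_def j
      by (cases "k = Suc i"; cases "k = i") auto
    then show "tF (?X j) (Vp (?X j)) \<notin> faces_at (?X k)" using B ju by (auto simp: faces_at_def)
  qed
qed


lemma invol_half:
  assumes "finite U" "\<forall>x\<in>U. s x \<in> U" "\<forall>x\<in>U. s (s x) = x" "\<forall>x\<in>U. E (s x) = (\<not> E x)"
  shows "card U = 2 * card {x\<in>U. E x}"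
proof -
  let ?A = "{x\<in>U. E x}" and ?B = "{x\<in>U. \<not> E x}"
  have inj: "inj_on s ?A" using assms(3) by (metis (mono_tags, lifting) inj_onI mem_Collect_eq)
  have img: "s ` ?A = ?B"
  proof
    show "s ` ?A \<subseteq> ?B" using assms(2,4) by auto
    show "?B \<subseteq> s ` ?A"
    proof
      fix y assume y: "y \<in> ?B"
      then have "s y \<in> ?A" "s (s y) = y" using assms(2,3,4) by auto
      then show "y \<in> s ` ?A" by (metis image_eqI)
    qed
  qed
  have "card ?A = card ?B" using card_image[OF inj] img by simp
  moreover have "U = ?A \<union> ?B" by auto
  moreover have "?A \<inter> ?B = {}" by auto
  moreover have "finite ?A" "finite ?B" using assms(1) by auto
  ultimately have "card U = card ?A + card ?B" by (metis card_Un_disjoint)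
  then show ?thesis using `card ?A = card ?B` by simp
qed

lemma colouring_upd:
  assumes "F \<in> D"
  shows "colouring D bc (\<omega>(F := v)) = (colouring D bc \<omega>)(F := v)"
  using assms by (intro ext) (auto simp: colouring_def)

lemma configs_upd:
  assumes "\<omega> \<in> configs D" "F \<in> D"
  shows "\<omega>(F := v) \<in> configs D"
  using PiE_fun_upd[of v "\<lambda>_. UNIV" F \<omega> D] assms by (simp add: configs_def insert_absorb)

lemma init_col:
  assumes "boundary_condition D bc a b"
  shows "\<exists>f\<in>faces_at a. colouring D bc \<omega> f" "\<exists>f\<in>faces_at a. \<not> colouring D bc \<omega> f"
proof -
  have bf: "bdry_faces D \<subseteq> Faces - D" by (auto simp: bdry_faces_def)
  obtain f1 where f1: "f1 \<in> faces_at a" "f1 \<in> bdry_faces D" "bc f1" using assms unfolding boundary_condition_def by blast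
  obtain f2 where f2: "f2 \<in> faces_at a" "f2 \<in> bdry_faces D" "\<not> bc f2" using assms unfolding boundary_condition_def by blast
  show "\<exists>f\<in>faces_at a. colouring D bc \<omega> f" using f1 bf by (auto simp: colouring_def)
  show "\<exists>f\<in>faces_at a. \<not> colouring D bc \<omega> f" using f2 bf by (auto simp: colouring_def)
qed

lemma unblocked_cong:
  assumes "\<forall>k\<le>j. explore c1 a k = explore c2 a k"
  shows "unblocked_at D a b c1 j = unblocked_at D a b c2 j"
proof -
  have "map (explore c1 a) [0..<Suc j] = map (explore c2 a) [0..<Suc j]"
    using assms by (auto intro!: map_cong)
  then show ?thesis unfolding unblocked_at_def by (simp only:)
qed


lemma tog: "p \<in> {x,y} \<Longrightarrow> x \<noteq> y \<Longrightarrow> ((if b then x else y) = p) = (\<not> ((if b then y else x) = p))"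
  by auto

theorem lemma4p1:
  fixes D :: "face set" and bc :: "face \<Rightarrow> bool" and a b :: vtx and j :: nat
  assumes "lattice_domain D"
    and "boundary_condition D bc a b"
    and "\<exists>\<omega>\<in>configs D. unblocked_at D a b (colouring D bc \<omega>) j"
  shows
    "cond_prob_unif (configs D)
       (\<lambda>\<omega>. let X = explore (colouring D bc \<omega>) a in
               X (Suc j) = P_of (X (j - 1)) (X j))
       (\<lambda>\<omega>. unblocked_at D a b (colouring D bc \<omega>) j) = 1/2 \<and>
     cond_prob_unif (configs D)
       (\<lambda>\<omega>. let X = explore (colouring D bc \<omega>) a in
               X (Suc j) = Vprime (X j) \<and> X (Suc (Suc j)) = Q_of (X (j - 1)) (X j))
       (\<lambda>\<omega>. unblocked_at D a b (colouring D bc \<omega>) j) = 1/4 \<and>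
     cond_prob_unif (configs D)
       (\<lambda>\<omega>. let X = explore (colouring D bc \<omega>) a in
               X (Suc j) = Vprime (X j) \<and> X (Suc (Suc j)) = R_of (X (j - 1)) (X j))
       (\<lambda>\<omega>. unblocked_at D a b (colouring D bc \<omega>) j) = 1/4"
proof -
  define c where "c \<omega> = colouring D bc \<omega>" for \<omega>
  define X where "X \<omega> = explore (c \<omega>) a" for \<omega>
  define U where "U = {\<omega> \<in> configs D. unblocked_at D a b (c \<omega>) j}"
  define u where "u \<omega> = X \<omega> (j-1)" for \<omega>
  define V where "V \<omega> = X \<omega> j" for \<omega>
  define F where "F \<omega> = tF (u \<omega>) (V \<omega>)" for \<omega>
  define G where "G \<omega> = tF (V \<omega>) (Vp (V \<omega>))" for \<omega>
  have init: "\<exists>f\<in>faces_at a. c \<omega> f" "\<exists>f\<in>faces_at a. \<not> c \<omega> f" for \<omega>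
    unfolding c_def using init_col[OF assms(2)] by auto
  have UF: "1 \<le> j \<and> bw_adj (u \<omega>) (V \<omega>) \<and> \<not> bw_short (u \<omega>) (V \<omega>) \<and> faces_at (V \<omega>) \<subseteq> D \<and>
      (\<forall>k<j. F \<omega> \<notin> faces_at (X \<omega> k)) \<and> G \<omega> \<in> D \<and> (\<forall>k\<le>j. G \<omega> \<notin> faces_at (X \<omega> k))"
    if "\<omega> \<in> U" for \<omega>
  proof -
    have w: "unblocked_at D a b (c \<omega>) j" using that unfolding U_def by simp
    note R = ub_facts[OF assms(1,2) w]
    show ?thesis unfolding X_def u_def V_def F_def G_def using R(1-7) by blast
  qed
  obtain \<omega>0 where w0: "\<omega>0 \<in> U" using assms(3) unfolding U_def c_def by blast
  have j1: "1 \<le> j" using UF[OF w0] by simp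
  have FD: "F \<omega> \<in> D" if "\<omega> \<in> U" for \<omega>
    using UF[OF that] turn_props(2)[of "u \<omega>" "V \<omega>"] unfolding F_def by auto
  have finC: "finite (configs D)"
    using assms(1) unfolding configs_def lattice_domain_def by (auto intro!: finite_PiE)
  have finU: "finite U" using finC unfolding U_def by simp
  have cardU: "card U > 0" using finU w0 card_gt_0_iff by blast
  have next1: "X \<omega> (Suc j) = (if \<omega> (F \<omega>) then tR (u \<omega>) (V \<omega>) else tL (u \<omega>) (V \<omega>))" if "\<omega> \<in> U" for \<omega>
  proof -
    obtain i where ji: "j = Suc i" using j1 by (cases j) auto
    have "explore (c \<omega>) a (Suc (Suc i)) = (let u = explore (c \<omega>) a i; v = explore (c \<omega>) a (Suc i) in
           if c \<omega> (tF u v) then tR u v else tL u v)" by (rule explore_next[OF init])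
    then have "X \<omega> (Suc j) = (if c \<omega> (F \<omega>) then tR (u \<omega>) (V \<omega>) else tL (u \<omega>) (V \<omega>))"
      unfolding X_def u_def V_def F_def ji Let_def by simp
    moreover have "c \<omega> (F \<omega>) = \<omega> (F \<omega>)" using FD[OF that] by (simp add: c_def colouring_def)
    ultimately show ?thesis by simp
  qed
  have flipF: "\<omega>(F \<omega> := v) \<in> U \<and> (\<forall>k\<le>j. X (\<omega>(F \<omega> := v)) k = X \<omega> k)" if "\<omega> \<in> U" for \<omega> v
  proof -
    let ?w = "\<omega>(F \<omega> := v)"
    have cf: "?w \<in> configs D" using configs_upd[OF _ FD[OF that]] that unfolding U_def by auto
    have cc: "c ?w = (c \<omega>)(F \<omega> := v)" unfolding c_def by (rule colouring_upd[OF FD[OF that]])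
    have ag: "\<forall>k<j. \<forall>f\<in>faces_at (explore (c \<omega>) a k). c \<omega> f = c ?w f"
      using UF[OF that] unfolding cc X_def by auto
    have loc: "\<forall>k\<le>j. X ?w k = X \<omega> k" using explore_local[OF ag] unfolding X_def by simp
    have "unblocked_at D a b (c ?w) j = unblocked_at D a b (c \<omega>) j"
      by (rule unblocked_cong) (use loc in \<open>simp add: X_def\<close>)
    then have "?w \<in> U" using cf that unfolding U_def by simp
    then show ?thesis using loc by simp
  qed
  have sameF: "u (\<omega>(F \<omega> := v)) = u \<omega> \<and> V (\<omega>(F \<omega> := v)) = V \<omega> \<and> F (\<omega>(F \<omega> := v)) = F \<omega>" if "\<omega> \<in> U" for \<omega> v
    using flipF[OF that, of v] j1 unfolding u_def V_def F_def by auto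
  define sF where "sF \<omega> = \<omega>(F \<omega> := \<not> \<omega> (F \<omega>))" for \<omega>
  have sF1: "\<forall>\<omega>\<in>U. sF \<omega> \<in> U" unfolding sF_def using flipF by blast
  have sF2: "\<forall>\<omega>\<in>U. sF (sF \<omega>) = \<omega>"
  proof
    fix \<omega> assume w: "\<omega> \<in> U"
    have "F (sF \<omega>) = F \<omega>" unfolding sF_def using sameF[OF w] by blast
    then show "sF (sF \<omega>) = \<omega>" unfolding sF_def by (simp add: sF_def)
  qed
  have nF: "X (sF \<omega>) (Suc j) = (if \<omega> (F \<omega>) then tL (u \<omega>) (V \<omega>) else tR (u \<omega>) (V \<omega>)) \<and> u (sF \<omega>) = u \<omega> \<and> V (sF \<omega>) = V \<omega>"
    if "\<omega> \<in> U" for \<omega>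
  proof -
    have s: "u (sF \<omega>) = u \<omega>" "V (sF \<omega>) = V \<omega>" "F (sF \<omega>) = F \<omega>" using sameF[OF that] unfolding sF_def by auto
    have "sF \<omega> (F (sF \<omega>)) = (\<not> \<omega> (F \<omega>))" using s(3) unfolding sF_def by simp
    then show ?thesis using next1[OF sF1[rule_format, OF that]] s by simp
  qed
  have adjU: "bw_adj (u \<omega>) (V \<omega>)" "\<not> bw_short (u \<omega>) (V \<omega>)" if "\<omega> \<in> U" for \<omega>
    using UF[OF that] by auto
  have tLR: "tL (u \<omega>) (V \<omega>) \<noteq> tR (u \<omega>) (V \<omega>)" if "\<omega> \<in> U" for \<omega>
    using turn_props(8)[OF adjU(1)[OF that]] .
  define EP where "EP \<omega> = (X \<omega> (Suc j) = P_of (u \<omega>) (V \<omega>))" for \<omega>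
  have c1: "card U = 2 * card {\<omega>\<in>U. EP \<omega>}"
  proof (rule invol_half[OF finU sF1 sF2], rule ballI)
    fix \<omega> assume w: "\<omega> \<in> U"
    have P: "P_of (u \<omega>) (V \<omega>) \<in> {tL (u \<omega>) (V \<omega>), tR (u \<omega>) (V \<omega>)}" using ident_PV(2)[OF adjU[OF w]] .
    have n: "X (sF \<omega>) (Suc j) = (if \<omega> (F \<omega>) then tL (u \<omega>) (V \<omega>) else tR (u \<omega>) (V \<omega>))"
      "u (sF \<omega>) = u \<omega>" "V (sF \<omega>) = V \<omega>" using nF[OF w] by auto
    show "EP (sF \<omega>) = (\<not> EP \<omega>)" unfolding EP_def n next1[OF w] by (rule tog[OF P tLR[OF w]])
  qed
  define E1 where "E1 \<omega> = (X \<omega> (Suc j) = Vprime (V \<omega>))" for \<omega>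
  have c2: "card U = 2 * card {\<omega>\<in>U. E1 \<omega>}"
  proof (rule invol_half[OF finU sF1 sF2], rule ballI)
    fix \<omega> assume w: "\<omega> \<in> U"
    have P: "Vprime (V \<omega>) \<in> {tL (u \<omega>) (V \<omega>), tR (u \<omega>) (V \<omega>)}" using ident_PV(1)[OF adjU[OF w]] .
    have n: "X (sF \<omega>) (Suc j) = (if \<omega> (F \<omega>) then tL (u \<omega>) (V \<omega>) else tR (u \<omega>) (V \<omega>))"
      "u (sF \<omega>) = u \<omega>" "V (sF \<omega>) = V \<omega>" using nF[OF w] by auto
    show "E1 (sF \<omega>) = (\<not> E1 \<omega>)" unfolding E1_def n next1[OF w] by (rule tog[OF P tLR[OF w]])
  qed
  define U1 where "U1 = {\<omega>\<in>U. E1 \<omega>}"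
  have finU1: "finite U1" using finU unfolding U1_def by simp
  have vp: "Vprime v = Vp v" for v by (rule Vprime_eq)
  have next2: "X \<omega> (Suc (Suc j)) = (if \<omega> (G \<omega>) then tR (V \<omega>) (Vp (V \<omega>)) else tL (V \<omega>) (Vp (V \<omega>)))"
    if "\<omega> \<in> U1" for \<omega>
  proof -
    have w: "\<omega> \<in> U" "X \<omega> (Suc j) = Vp (V \<omega>)" using that unfolding U1_def E1_def vp by auto
    have "X \<omega> (Suc (Suc j)) = (if c \<omega> (G \<omega>) then tR (V \<omega>) (Vp (V \<omega>)) else tL (V \<omega>) (Vp (V \<omega>)))"
      using explore_next[OF init, of \<omega> j] w(2) unfolding X_def[symmetric] G_def V_def Let_def by simp
    moreover have "c \<omega> (G \<omega>) = \<omega> (G \<omega>)" using UF[OF w(1)] by (simp add: c_def colouring_def)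
    ultimately show ?thesis by simp
  qed
  have flipG: "\<omega>(G \<omega> := v) \<in> U1 \<and> (\<forall>k\<le>Suc j. X (\<omega>(G \<omega> := v)) k = X \<omega> k)" if "\<omega> \<in> U1" for \<omega> v
  proof -
    let ?w = "\<omega>(G \<omega> := v)"
    have w: "\<omega> \<in> U" using that unfolding U1_def by simp
    have GD: "G \<omega> \<in> D" using UF[OF w] by simp
    have cf: "?w \<in> configs D" using configs_upd[OF _ GD] w unfolding U_def by auto
    have cc: "c ?w = (c \<omega>)(G \<omega> := v)" unfolding c_def by (rule colouring_upd[OF GD])
    have ag: "\<forall>k<Suc j. \<forall>f\<in>faces_at (explore (c \<omega>) a k). c \<omega> f = c ?w f"
      using UF[OF w] unfolding cc X_def by auto
    have loc: "\<forall>k\<le>Suc j. X ?w k = X \<omega> k" using explore_local[OF ag] unfolding X_def by simp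
    have "unblocked_at D a b (c ?w) j = unblocked_at D a b (c \<omega>) j"
      by (rule unblocked_cong) (use loc in \<open>simp add: X_def\<close>)
    then have "?w \<in> U" using cf w unfolding U_def by simp
    moreover have "V ?w = V \<omega>" using loc unfolding V_def by simp
    moreover have "X ?w (Suc j) = X \<omega> (Suc j)" using loc by simp
    ultimately have "?w \<in> U1" using that unfolding U1_def E1_def by simp
    then show ?thesis using loc by simp
  qed
  have sameG: "u (\<omega>(G \<omega> := v)) = u \<omega> \<and> V (\<omega>(G \<omega> := v)) = V \<omega> \<and> G (\<omega>(G \<omega> := v)) = G \<omega>" if "\<omega> \<in> U1" for \<omega> v
    using flipG[OF that, of v] j1 unfolding u_def V_def G_def by auto
  define sG where "sG \<omega> = \<omega>(G \<omega> := \<not> \<omega> (G \<omega>))" for \<omega>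
  have sG1: "\<forall>\<omega>\<in>U1. sG \<omega> \<in> U1" unfolding sG_def using flipG by blast
  have sG2: "\<forall>\<omega>\<in>U1. sG (sG \<omega>) = \<omega>"
  proof
    fix \<omega> assume w: "\<omega> \<in> U1"
    have "G (sG \<omega>) = G \<omega>" unfolding sG_def using sameG[OF w] by blast
    then show "sG (sG \<omega>) = \<omega>" unfolding sG_def by (simp add: sG_def)
  qed
  have nG: "X (sG \<omega>) (Suc (Suc j)) = (if \<omega> (G \<omega>) then tL (V \<omega>) (Vp (V \<omega>)) else tR (V \<omega>) (Vp (V \<omega>))) \<and> u (sG \<omega>) = u \<omega> \<and> V (sG \<omega>) = V \<omega>"
    if "\<omega> \<in> U1" for \<omega>
  proof -
    have s: "u (sG \<omega>) = u \<omega>" "V (sG \<omega>) = V \<omega>" "G (sG \<omega>) = G \<omega>" using sameG[OF that] unfolding sG_def by auto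
    have "sG \<omega> (G (sG \<omega>)) = (\<not> \<omega> (G \<omega>))" using s(3) unfolding sG_def by simp
    then show ?thesis using next2[OF sG1[rule_format, OF that]] s by simp
  qed
  have tLR2: "tL (V \<omega>) (Vp (V \<omega>)) \<noteq> tR (V \<omega>) (Vp (V \<omega>))" for \<omega>
    using turn_props(8)[OF Vp_adj] .
  have QR: "{Q_of (u \<omega>) (V \<omega>), R_of (u \<omega>) (V \<omega>)} = {tL (V \<omega>) (Vp (V \<omega>)), tR (V \<omega>) (Vp (V \<omega>))}" for \<omega>
    using ident_QR(1)[OF Vp_adj] .
  define EQ where "EQ \<omega> = (X \<omega> (Suc (Suc j)) = Q_of (u \<omega>) (V \<omega>))" for \<omega>
  define ER where "ER \<omega> = (X \<omega> (Suc (Suc j)) = R_of (u \<omega>) (V \<omega>))" for \<omega>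
  have c3: "card U1 = 2 * card {\<omega>\<in>U1. EQ \<omega>}"
  proof (rule invol_half[OF finU1 sG1 sG2], rule ballI)
    fix \<omega> assume w: "\<omega> \<in> U1"
    have P: "Q_of (u \<omega>) (V \<omega>) \<in> {tL (V \<omega>) (Vp (V \<omega>)), tR (V \<omega>) (Vp (V \<omega>))}" using QR by blast
    have n: "X (sG \<omega>) (Suc (Suc j)) = (if \<omega> (G \<omega>) then tL (V \<omega>) (Vp (V \<omega>)) else tR (V \<omega>) (Vp (V \<omega>)))"
      "u (sG \<omega>) = u \<omega>" "V (sG \<omega>) = V \<omega>" using nG[OF w] by auto
    show "EQ (sG \<omega>) = (\<not> EQ \<omega>)" unfolding EQ_def n next2[OF w] by (rule tog[OF P tLR2])
  qed
  have c4: "card U1 = 2 * card {\<omega>\<in>U1. ER \<omega>}"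
  proof (rule invol_half[OF finU1 sG1 sG2], rule ballI)
    fix \<omega> assume w: "\<omega> \<in> U1"
    have P: "R_of (u \<omega>) (V \<omega>) \<in> {tL (V \<omega>) (Vp (V \<omega>)), tR (V \<omega>) (Vp (V \<omega>))}" using QR by blast
    have n: "X (sG \<omega>) (Suc (Suc j)) = (if \<omega> (G \<omega>) then tL (V \<omega>) (Vp (V \<omega>)) else tR (V \<omega>) (Vp (V \<omega>)))"
      "u (sG \<omega>) = u \<omega>" "V (sG \<omega>) = V \<omega>" using nG[OF w] by auto
    show "ER (sG \<omega>) = (\<not> ER \<omega>)" unfolding ER_def n next2[OF w] by (rule tog[OF P tLR2])
  qed
  have s1: "{\<omega> \<in> configs D. (let Y = explore (colouring D bc \<omega>) a in Y (Suc j) = P_of (Y (j - 1)) (Y j)) \<and>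
              unblocked_at D a b (colouring D bc \<omega>) j} = {\<omega>\<in>U. EP \<omega>}"
    unfolding U_def EP_def X_def u_def V_def c_def Let_def by auto
  have s0: "{\<omega> \<in> configs D. unblocked_at D a b (colouring D bc \<omega>) j} = U"
    unfolding U_def c_def by simp
  have s2: "{\<omega> \<in> configs D. (let Y = explore (colouring D bc \<omega>) a in Y (Suc j) = Vprime (Y j) \<and> Y (Suc (Suc j)) = Q_of (Y (j - 1)) (Y j)) \<and>
              unblocked_at D a b (colouring D bc \<omega>) j} = {\<omega>\<in>U1. EQ \<omega>}"
    unfolding U1_def U_def E1_def EQ_def X_def u_def V_def c_def Let_def by auto
  have s3: "{\<omega> \<in> configs D. (let Y = explore (colouring D bc \<omega>) a in Y (Suc j) = Vprime (Y j) \<and> Y (Suc (Suc j)) = R_of (Y (j - 1)) (Y j)) \<and>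
              unblocked_at D a b (colouring D bc \<omega>) j} = {\<omega>\<in>U1. ER \<omega>}"
    unfolding U1_def U_def E1_def ER_def X_def u_def V_def c_def Let_def by auto
  have r1: "real (card {\<omega>\<in>U. EP \<omega>}) / real (card U) = 1/2" using c1 cardU by simp
  have r2: "real (card {\<omega>\<in>U1. EQ \<omega>}) / real (card U) = 1/4" using c2 c3 cardU unfolding U1_def by simp
  have r3: "real (card {\<omega>\<in>U1. ER \<omega>}) / real (card U) = 1/4" using c2 c4 cardU unfolding U1_def by simp
  show ?thesis unfolding cond_prob_unif_def s0 s1 s2 s3 using r1 r2 r3 by simp
qed


end
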